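(* Fix $0<c<1$. Let $d=d(n)$ with $d=o(n)$ (and $dn$ even). Then, as $n\to\infty$, \[ -O\left(\frac{1}{\log \frac{n}{d}}\right) \leq \frac{\log \lvert\mathcal{G}_{d,c}(n)\rvert}{\frac{dn}{2} \log \frac{n}{d+1}} - \left(1 - c\cdot \frac{d-1}{d+1}\right) \leq c\,\frac{\log d}{\log \frac{n}{d+1}} + O\left(\frac{1}{\log \frac{n}{d}}\right).\]
   Context: For $n,d$ let $T_{\max}=T_{\max}(n,d)=\binom{d}{2}\frac{n}{3}$ (the maximum number of triangles of an $n$-vertex $d$-regular graph). $\mathcal{G}_{d,c}(n)$ denotes the set of (simple) $d$-regular graphs on the $n$ labeled nodes $\{1,\dots,n\}$ that contain at least $c\cdot T_{\max}$ triangles. Throughout, $d=o(n)$. *)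

theory Defs
  imports Complex_Main "HOL-Library.Landau_Symbols"
begin

definition regular_graphs :: "nat \<Rightarrow> nat \<Rightarrow> nat set set set" where
  "regular_graphs n d =
     {E. E \<subseteq> {e. e \<subseteq> {1..n} \<and> card e = 2} \<and>
         (\<forall>v\<in>{1..n}. card {e\<in>E. v \<in> e} = d)}"

definition triangles :: "nat set set \<Rightarrow> nat set set" where
  "triangles E = {T. card T = 3 \<and> (\<forall>e. e \<subseteq> T \<and> card e = 2 \<longrightarrow> e \<in> E)}"

definition T_max :: "nat \<Rightarrow> nat \<Rightarrow> real" where
  "T_max n d = real (d choose 2) * real n / 3"

definition G_dc :: "nat \<Rightarrow> real \<Rightarrow> nat \<Rightarrow> nat set set set" where
  "G_dc d c n = {E \<in> regular_graphs n d. real (card (triangles E)) \<ge> c * T_max n d}"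

end

theory Submission
  imports Defs "HOL-Combinatorics.Permutations"
begin


definition reg_on :: "'a set \<Rightarrow> nat \<Rightarrow> 'a set set \<Rightarrow> bool" where
  "reg_on V d G \<longleftrightarrow> G \<subseteq> {e. e \<subseteq> V \<and> card e = 2} \<and> (\<forall>v\<in>V. card {e\<in>G. v \<in> e} = d)"

lemma regular_graphs_reg_on: "regular_graphs n d = {G. reg_on {1..n} d G}"
  by (auto simp: regular_graphs_def reg_on_def)

lemma reg_on_finite: "finite V \<Longrightarrow> reg_on V d G \<Longrightarrow> finite G"
  unfolding reg_on_def by (rule finite_subset[of _ "Pow V"]) auto

lemma handshake:
  assumes "finite V" "reg_on V d G"
  shows "2 * card G = d * card V"
proof -
  have fin: "finite G" using reg_on_finite assms by blast
  have sub: "\<And>e. e \<in> G \<Longrightarrow> e \<subseteq> V \<and> card e = 2" using assms(2) unfolding reg_on_def by blast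
  have "(\<Sum>v\<in>V. card {e\<in>G. v\<in>e}) = (\<Sum>v\<in>V. \<Sum>e\<in>G. if v \<in> e then 1 else 0)"
    using fin by (simp add: sum.inter_filter[symmetric])
  also have "\<dots> = (\<Sum>e\<in>G. \<Sum>v\<in>V. if v \<in> e then 1 else 0)" by (rule sum.swap)
  also have "\<dots> = (\<Sum>e\<in>G. card {v\<in>V. v\<in>e})"
    using assms(1) by (simp add: sum.inter_filter[symmetric])
  also have "\<dots> = (\<Sum>e\<in>G. 2)"
  proof (rule sum.cong)
    fix e assume "e \<in> G"
    then have "{v\<in>V. v\<in>e} = e" using sub by auto
    then show "card {v\<in>V. v\<in>e} = 2" using sub \<open>e\<in>G\<close> by simp
  qed simp
  finally have "(\<Sum>v\<in>V. card {e\<in>G. v\<in>e}) = 2 * card G" by simp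
  moreover have "(\<Sum>v\<in>V. card {e\<in>G. v\<in>e}) = d * card V"
    using assms(2) unfolding reg_on_def by simp
  ultimately show ?thesis by simp
qed

lemma deg_nbrs:
  assumes "G \<subseteq> {e. card e = 2}"
  shows "card {e\<in>G. v \<in> e} = card {w. {v,w} \<in> G}"
proof -
  have "bij_betw (\<lambda>w. {v,w}) {w. {v,w} \<in> G} {e\<in>G. v \<in> e}"
  proof (rule bij_betwI')
    fix x y assume "x \<in> {w. {v,w} \<in> G}" "y \<in> {w. {v,w} \<in> G}"
    then show "({v, x} = {v, y}) = (x = y)" by (auto simp: doubleton_eq_iff)
  next
    fix x assume "x \<in> {w. {v,w} \<in> G}" then show "{v,x} \<in> {e\<in>G. v \<in> e}" by auto
  next
    fix e assume e: "e \<in> {e\<in>G. v \<in> e}"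
    then have "card e = 2" using assms by auto
    then obtain a b where ab: "e = {a,b}" "a \<noteq> b" by (auto simp: card_2_iff)
    show "\<exists>x\<in>{w. {v,w} \<in> G}. e = {v,x}"
    proof (cases "v = a")
      case True then show ?thesis using e ab by auto
    next
      case False then have "v = b" using e ab by auto
      then show ?thesis using e ab by (auto simp: insert_commute)
    qed
  qed
  then show ?thesis by (simp add: bij_betw_same_card)
qed

definition img :: "('a \<Rightarrow> 'b) \<Rightarrow> 'a set set \<Rightarrow> 'b set set" where
  "img f G = (\<lambda>e. f ` e) ` G"

lemma reg_on_img:
  assumes "reg_on V d G" "inj_on f V"
  shows "reg_on (f ` V) d (img f G)"
proof -
  have sub: "\<And>e. e \<in> G \<Longrightarrow> e \<subseteq> V \<and> card e = 2" using assms(1) unfolding reg_on_def by blast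
  have inj: "inj_on (image f) G"
    using inj_on_image_Pow[OF assms(2)] by (rule inj_on_subset) (use sub in auto)
  have "img f G \<subseteq> {e. e \<subseteq> f ` V \<and> card e = 2}"
  proof
    fix x assume "x \<in> img f G"
    then obtain e where e: "e \<in> G" "x = f ` e" unfolding img_def by auto
    have "card (f ` e) = card e" using sub[OF e(1)] assms(2) by (meson card_image inj_on_subset)
    then show "x \<in> {e. e \<subseteq> f ` V \<and> card e = 2}" using e sub by auto
  qed
  moreover have "\<forall>v\<in>f ` V. card {e\<in>img f G. v \<in> e} = d"
  proof
    fix v assume "v \<in> f ` V"
    then obtain u where u: "u \<in> V" "v = f u" by auto
    have "{e\<in>img f G. v \<in> e} = image f ` {e\<in>G. u \<in> e}"
    proof (intro equalityI subsetI)
      fix x assume "x \<in> {e\<in>img f G. v \<in> e}"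
      then obtain e where e: "e \<in> G" "x = f ` e" "v \<in> f ` e" unfolding img_def by auto
      then have "u \<in> e" using u sub[OF e(1)] assms(2) by (auto simp: inj_on_def)
      then show "x \<in> image f ` {e\<in>G. u \<in> e}" using e by auto
    qed (use u in \<open>auto simp: img_def\<close>)
    also have "card \<dots> = card {e\<in>G. u \<in> e}"
      by (rule card_image) (rule inj_on_subset[OF inj], auto)
    finally show "card {e\<in>img f G. v \<in> e} = d" using assms(1) u unfolding reg_on_def by simp
  qed
  ultimately show ?thesis unfolding reg_on_def by blast
qed

lemma card_img:
  assumes "G \<subseteq> Pow V" "inj_on f V"
  shows "card (img f G) = card G"
  unfolding img_def by (rule card_image, rule inj_on_subset[OF inj_on_image_Pow[OF assms(2)]]) (use assms in auto)


lemma seq_bound: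
  fixes W :: "(nat \<Rightarrow> 'b set) \<Rightarrow> nat \<Rightarrow> real" and S :: "nat \<Rightarrow> 'b set"
  assumes nonneg: "\<And>F v. W F v \<ge> 0"
  and loc: "\<And>F F' v. v \<ge> 1 \<Longrightarrow> (\<And>u. u \<in> {1..v} \<Longrightarrow> F u = F' u) \<Longrightarrow> W F v = W F' v"
  and bnd: "\<And>F v. v \<in> {1..n} \<Longrightarrow> (\<Sum>X\<in>Pow (S v). W (F(v:=X)) v) \<le> M"
  and fin: "\<And>v. finite (S v)"
  shows "k \<le> n \<Longrightarrow> (\<Sum>F\<in>PiE {1..k} (\<lambda>v. Pow (S v)). \<Prod>v\<in>{1..k}. W F v) \<le> M ^ k"
proof (induction k)
  case 0 then show ?case by simp
next
  case (Suc k)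
  have M0: "M \<ge> 0"
  proof -
    have "0 \<le> (\<Sum>X\<in>Pow (S 1). W ((\<lambda>_. {})(1:=X)) 1)" by (rule sum_nonneg) (rule nonneg)
    also have "\<dots> \<le> M" by (rule bnd) (use Suc.prems in auto)
    finally show ?thesis .
  qed
  have eq: "{1..Suc k} = insert (Suc k) {1..k}" by auto
  define P where "P = PiE {1..k} (\<lambda>v. Pow (S v))"
  define f where "f = (\<lambda>(X::'b set, g::nat \<Rightarrow> 'b set). g(Suc k := X))"
  have "(\<Sum>F\<in>PiE {1..Suc k} (\<lambda>v. Pow (S v)). \<Prod>v\<in>{1..Suc k}. W F v)
       = (\<Sum>p\<in>Pow (S (Suc k)) \<times> P. \<Prod>v\<in>{1..Suc k}. W (f p) v)"
    unfolding eq PiE_insert_eq P_def f_def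
    by (subst sum.reindex) (auto intro: inj_combinator)
  also have "\<dots> = (\<Sum>p\<in>Pow (S (Suc k)) \<times> P. W (f p) (Suc k) * (\<Prod>v\<in>{1..k}. W (snd p) v))"
  proof (rule sum.cong[OF refl])
    fix p assume "p \<in> Pow (S (Suc k)) \<times> P"
    obtain X g where p: "p = (X, g)" by (cases p)
    have "(\<Prod>v\<in>{1..k}. W (f p) v) = (\<Prod>v\<in>{1..k}. W (snd p) v)"
      by (rule prod.cong[OF refl], rule loc) (auto simp: p f_def)
    then show "(\<Prod>v\<in>{1..Suc k}. W (f p) v) = W (f p) (Suc k) * (\<Prod>v\<in>{1..k}. W (snd p) v)"
      unfolding eq by simp
  qed
  also have "\<dots> = (\<Sum>X\<in>Pow (S (Suc k)). \<Sum>g\<in>P. W (g(Suc k := X)) (Suc k) * (\<Prod>v\<in>{1..k}. W g v))"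
    by (simp add: sum.cartesian_product f_def split_def)
  also have "\<dots> = (\<Sum>g\<in>P. \<Sum>X\<in>Pow (S (Suc k)). W (g(Suc k := X)) (Suc k) * (\<Prod>v\<in>{1..k}. W g v))"
    by (rule sum.swap)
  also have "\<dots> = (\<Sum>g\<in>P. (\<Prod>v\<in>{1..k}. W g v) * (\<Sum>X\<in>Pow (S (Suc k)). W (g(Suc k := X)) (Suc k)))"
    by (simp add: sum_distrib_left sum_distrib_right mult.commute)
  also have "\<dots> \<le> (\<Sum>g\<in>P. (\<Prod>v\<in>{1..k}. W g v) * M)"
    by (rule sum_mono, rule mult_left_mono, rule bnd) (use Suc.prems in \<open>auto intro: prod_nonneg nonneg\<close>)
  also have "\<dots> = (\<Sum>g\<in>P. \<Prod>v\<in>{1..k}. W g v) * M" by (simp add: sum_distrib_right)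
  also have "\<dots> \<le> M ^ k * M"
    by (rule mult_right_mono) (use Suc M0 in \<open>auto simp: P_def\<close>)
  finally show ?case by (simp add: mult.commute)
qed


definition Fs :: "nat set set \<Rightarrow> nat \<Rightarrow> nat set" where
  "Fs G v = {w. {v,w} \<in> G \<and> v < w}"
definition LocF :: "(nat \<Rightarrow> nat set) \<Rightarrow> nat \<Rightarrow> nat set" where
  "LocF F v = {w. v < w \<and> (\<exists>u\<in>{1..<v}. v \<in> F u \<and> w \<in> F u)}"
definition LocT :: "nat \<Rightarrow> (nat \<Rightarrow> nat set) \<Rightarrow> nat \<Rightarrow> nat set" where
  "LocT d F v = (if finite (LocF F v) \<and> card (LocF F v) \<le> d*d then LocF F v else {})"
definition Wt :: "nat \<Rightarrow> real \<Rightarrow> real \<Rightarrow> (nat \<Rightarrow> nat set) \<Rightarrow> nat \<Rightarrow> real" where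
  "Wt d A y F v = A ^ card (F v \<inter> LocT d F v) * y ^ card (F v)"

definition locE :: "(nat \<Rightarrow> nat) \<Rightarrow> nat set set \<Rightarrow> nat set \<Rightarrow> bool" where
  "locE \<sigma> G e \<longleftrightarrow> (\<exists>u. \<forall>x\<in>e. {u,x} \<in> G \<and> \<sigma> u < \<sigma> x)"
definition ell :: "(nat \<Rightarrow> nat) \<Rightarrow> nat set set \<Rightarrow> nat" where
  "ell \<sigma> G = card {e\<in>G. locE \<sigma> G e}"

lemma sigma_count:
  fixes G :: "nat set set"
  assumes G: "G \<subseteq> {e. e \<subseteq> {1..n} \<and> card e = 2}"
  shows "(\<Sum>v\<in>{1..n}. card {w. {v,w} \<in> G \<and> v < w \<and> Q {v,w}}) = card {e\<in>G. Q e}"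
proof -
  have fin: "\<And>v. finite {w. {v,w} \<in> G \<and> v < w \<and> Q {v,w}}"
    by (rule finite_subset[of _ "{1..n}"]) (use G in auto)
  have "(\<Sum>v\<in>{1..n}. card {w. {v,w} \<in> G \<and> v < w \<and> Q {v,w}})
        = card (Sigma {1..n} (\<lambda>v. {w. {v,w} \<in> G \<and> v < w \<and> Q {v,w}}))"
    by (rule card_SigmaI[symmetric]) (use fin in auto)
  also have "\<dots> = card {e\<in>G. Q e}"
  proof (rule bij_betw_same_card[of "\<lambda>(v,w). {v,w}"], rule bij_betwI')
    fix p q assume p: "p \<in> Sigma {1..n} (\<lambda>v. {w. {v,w} \<in> G \<and> v < w \<and> Q {v,w}})"
      and q: "q \<in> Sigma {1..n} (\<lambda>v. {w. {v,w} \<in> G \<and> v < w \<and> Q {v,w}})"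
    then show "((case p of (v, w) \<Rightarrow> {v, w}) = (case q of (v, w) \<Rightarrow> {v, w})) = (p = q)"
      by (cases p; cases q) (auto simp: doubleton_eq_iff)
  next
    fix p assume "p \<in> Sigma {1..n} (\<lambda>v. {w. {v,w} \<in> G \<and> v < w \<and> Q {v,w}})"
    then show "(case p of (v, w) \<Rightarrow> {v, w}) \<in> {e\<in>G. Q e}" by auto
  next
    fix e assume e: "e \<in> {e\<in>G. Q e}"
    then have "card e = 2" "e \<subseteq> {1..n}" using G by auto
    then obtain a b where ab: "e = {a,b}" "a < b" 
      by (auto simp: card_2_iff) (metis insert_commute linorder_neqE_nat)
    then show "\<exists>p\<in>Sigma {1..n} (\<lambda>v. {w. {v,w} \<in> G \<and> v < w \<and> Q {v,w}}). e = (case p of (v, w) \<Rightarrow> {v, w})"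
      using e \<open>e \<subseteq> {1..n}\<close> by (intro bexI[of _ "(a,b)"]) auto
  qed
  finally show ?thesis .
qed

lemma LocF_cong: "(\<And>u. u \<in> {1..<v} \<Longrightarrow> F u = F' u) \<Longrightarrow> LocF F v = LocF F' v"
  unfolding LocF_def by auto

lemma Wt_local: "(\<And>u. u \<in> {1..v} \<Longrightarrow> F u = F' u) \<Longrightarrow> v \<ge> 1 \<Longrightarrow> Wt d A y F v = Wt d A y F' v"
proof -
  assume h: "\<And>u. u \<in> {1..v} \<Longrightarrow> F u = F' u" and v: "v \<ge> 1"
  have "LocF F v = LocF F' v" by (rule LocF_cong) (use h in auto)
  moreover have "F v = F' v" using h v by auto
  ultimately show ?thesis unfolding Wt_def LocT_def by simp
qed

lemma vertex_sum_bound: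
  assumes A: "A \<ge> 1" and y: "y \<ge> 0" and v: "v \<in> {1..n}"
  shows "(\<Sum>X\<in>Pow {v<..n}. Wt d A y (F(v:=X)) v) \<le> exp (y * n + y * (A - 1) * (d*d))"
proof -
  define L where "L = LocT d F v"
  have L: "finite L" "card L \<le> d*d" unfolding L_def LocT_def by auto
  have LF: "LocT d (F(v:=X)) v = L" for X
  proof -
    have "LocF (F(v:=X)) v = LocF F v" by (rule LocF_cong) auto
    then show ?thesis unfolding L_def LocT_def by simp
  qed
  define a where "a = (\<lambda>w. y * (if w \<in> L then A else 1))"
  have "(\<Sum>X\<in>Pow {v<..n}. Wt d A y (F(v:=X)) v) = (\<Sum>X\<in>Pow {v<..n}. \<Prod>w\<in>X. a w)"
  proof (rule sum.cong[OF refl])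
    fix X assume X: "X \<in> Pow {v<..n}"
    then have fX: "finite X" by (auto intro: finite_subset)
    have "(\<Prod>w\<in>X. a w) = (\<Prod>w\<in>X. y) * (\<Prod>w\<in>X. if w \<in> L then A else 1)"
      unfolding a_def by (rule prod.distrib)
    also have "(\<Prod>w\<in>X. if w \<in> L then A else 1) = A ^ card (X \<inter> L)"
      using fX by (simp add: prod.If_cases Int_def)
    finally show "Wt d A y (F(v:=X)) v = (\<Prod>w\<in>X. a w)"
      unfolding Wt_def LF by simp
  qed
  also have "\<dots> = (\<Prod>w\<in>{v<..n}. a w + 1)"
    by (subst prod_add) auto
  also have "\<dots> \<le> (\<Prod>w\<in>{v<..n}. exp (a w))"
    by (rule prod_mono) (use A y in \<open>auto simp: a_def add.commute\<close>)
  also have "\<dots> = exp (\<Sum>w\<in>{v<..n}. a w)" by (simp add: exp_sum)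
  also have "(\<Sum>w\<in>{v<..n}. a w) \<le> y * n + y * (A - 1) * (d*d)"
  proof -
    have "(\<Sum>w\<in>{v<..n}. a w) = (\<Sum>w\<in>{v<..n}. y + (if w \<in> L then y * (A - 1) else 0))"
      unfolding a_def by (rule sum.cong) (auto simp: algebra_simps)
    also have "\<dots> = y * card {v<..n} + y * (A - 1) * card ({v<..n} \<inter> L)"
      by (simp add: sum.distrib sum.If_cases Int_def)
    also have "\<dots> \<le> y * n + y * (A - 1) * (d*d)"
    proof (rule add_mono)
      show "y * real (card {v<..n}) \<le> y * real n" using y by (intro mult_left_mono) auto
      have "card ({v<..n} \<inter> L) \<le> d * d" using L by (meson card_mono inf_le2 le_trans)
      then show "y * (A - 1) * real (card ({v<..n} \<inter> L)) \<le> y * (A - 1) * real (d * d)"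
        using y A by (intro mult_left_mono) (auto simp del: of_nat_mult)
    qed
    finally show ?thesis .
  qed
  then have "exp (\<Sum>w\<in>{v<..n}. a w) \<le> exp (y * n + y * (A - 1) * (d*d))" by simp
  finally show ?thesis .
qed


definition phi :: "nat \<Rightarrow> nat set set \<Rightarrow> nat \<Rightarrow> nat set" where
  "phi n G = restrict (Fs G) {1..n}"

lemma reg_sub: "G \<in> regular_graphs n d \<Longrightarrow> G \<subseteq> {e. e \<subseteq> {1..n} \<and> card e = 2}"
  by (auto simp: regular_graphs_def)

lemma nbrs_card: "G \<in> regular_graphs n d \<Longrightarrow> u \<in> {1..n} \<Longrightarrow> card {w. {u,w}\<in>G} = d"
  using deg_nbrs[of G u] by (auto simp: regular_graphs_def)

lemma nbrs_sub: "G \<in> regular_graphs n d \<Longrightarrow> {w. {u,w}\<in>G} \<subseteq> {1..n}"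
  using reg_sub by blast

lemma edge_in: "G \<in> regular_graphs n d \<Longrightarrow> {u,w} \<in> G \<Longrightarrow> u \<in> {1..n} \<and> w \<in> {1..n} \<and> u \<noteq> w"
proof -
  assume G: "G \<in> regular_graphs n d" and e: "{u,w} \<in> G"
  then have "{u,w} \<subseteq> {1..n}" "card {u,w} = 2" using reg_sub[OF G] by auto
  moreover have "u \<noteq> w" using \<open>card {u,w} = 2\<close> by (cases "u = w") auto
  ultimately show ?thesis by auto
qed

lemma Loc_card:
  assumes G: "G \<in> regular_graphs n d" and v: "v \<in> {1..n}"
  shows "finite (LocF (phi n G) v) \<and> card (LocF (phi n G) v) \<le> d*d"
proof -
  let ?N = "\<lambda>u. {w. {u,w}\<in>G}"
  have sub: "LocF (phi n G) v \<subseteq> (\<Union>u\<in>?N v. ?N u)"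
  proof
    fix w assume "w \<in> LocF (phi n G) v"
    then obtain u where u: "u \<in> {1..<v}" "v \<in> phi n G u" "w \<in> phi n G u" unfolding LocF_def by auto
    then have "u \<in> {1..n}" using v by auto
    then have "{u,v} \<in> G" "{u,w} \<in> G" using u by (auto simp: phi_def Fs_def)
    then show "w \<in> (\<Union>u\<in>?N v. ?N u)" by (auto simp: insert_commute)
  qed
  have finN: "finite (?N u)" for u using nbrs_sub[OF G, of u] by (meson finite_atLeastAtMost finite_subset)
  have "card (\<Union>u\<in>?N v. ?N u) \<le> (\<Sum>u\<in>?N v. card (?N u))" by (rule card_UN_le) (rule finN)
  also have "\<dots> = (\<Sum>u\<in>?N v. d)"
    by (rule sum.cong[OF refl], rule nbrs_card[OF G]) (use nbrs_sub[OF G, of v] in auto)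
  also have "\<dots> = d * d" using nbrs_card[OF G v] by simp
  finally have "card (\<Union>u\<in>?N v. ?N u) \<le> d * d" .
  moreover have "finite (\<Union>u\<in>?N v. ?N u)" using finN by auto
  ultimately show ?thesis using sub by (meson card_mono finite_subset le_trans)
qed

lemma prod_Wt:
  fixes A y :: real
  assumes G: "G \<in> regular_graphs n d"
  shows "(\<Prod>v\<in>{1..n}. Wt d A y (phi n G) v) = A ^ ell (\<lambda>x. x) G * y ^ card G"
proof -
  have c1: "card (phi n G v \<inter> LocT d (phi n G) v) = card {w. {v,w} \<in> G \<and> v < w \<and> locE (\<lambda>x. x) G {v,w}}"
    if v: "v \<in> {1..n}" for v
  proof -
    have "LocT d (phi n G) v = LocF (phi n G) v" using Loc_card[OF G v] unfolding LocT_def by simp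
    moreover have "phi n G v \<inter> LocF (phi n G) v = {w. {v,w} \<in> G \<and> v < w \<and> locE (\<lambda>x. x) G {v,w}}"
    proof (intro equalityI subsetI)
      fix w assume "w \<in> phi n G v \<inter> LocF (phi n G) v"
      then obtain u where u: "u \<in> {1..<v}" "v \<in> phi n G u" "w \<in> phi n G u" "{v,w} \<in> G" "v < w"
        using v unfolding LocF_def phi_def Fs_def by auto
      then have "u \<in> {1..n}" using v by auto
      then have "{u,v} \<in> G" "{u,w} \<in> G" "u < v" "u < w" using u by (auto simp: phi_def Fs_def)
      then show "w \<in> {w. {v,w} \<in> G \<and> v < w \<and> locE (\<lambda>x. x) G {v,w}}"
        using u unfolding locE_def by auto
    next
      fix w assume w: "w \<in> {w. {v,w} \<in> G \<and> v < w \<and> locE (\<lambda>x. x) G {v,w}}"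
      then obtain u where u: "{u,v} \<in> G" "{u,w} \<in> G" "u < v" "u < w" unfolding locE_def by auto
      have "u \<in> {1..n}" using edge_in[OF G u(1)] by auto
      then show "w \<in> phi n G v \<inter> LocF (phi n G) v"
        using u w v unfolding LocF_def phi_def Fs_def by auto
    qed
    ultimately show ?thesis by simp
  qed
  have c2: "card (phi n G v) = card {w. {v,w} \<in> G \<and> v < w}" if v: "v \<in> {1..n}" for v
    using v by (simp add: phi_def Fs_def)
  have "(\<Prod>v\<in>{1..n}. Wt d A y (phi n G) v)
      = (\<Prod>v\<in>{1..n}. A ^ card {w. {v,w} \<in> G \<and> v < w \<and> locE (\<lambda>x. x) G {v,w}} * y ^ card {w. {v,w} \<in> G \<and> v < w})"
    by (rule prod.cong[OF refl]) (simp only: Wt_def c1 c2)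
  also have "\<dots> = A ^ (\<Sum>v\<in>{1..n}. card {w. {v,w} \<in> G \<and> v < w \<and> locE (\<lambda>x. x) G {v,w}})
                 * y ^ (\<Sum>v\<in>{1..n}. card {w. {v,w} \<in> G \<and> v < w})"
    by (simp add: power_sum prod.distrib)
  also have "\<dots> = A ^ ell (\<lambda>x. x) G * y ^ card G"
    using sigma_count[OF reg_sub[OF G], of "\<lambda>_. True"] unfolding sigma_count[OF reg_sub[OF G]] ell_def by simp
  finally show ?thesis .
qed

lemma phi_inj: "inj_on (phi n) (regular_graphs n d)"
proof (rule inj_onI)
  fix G1 G2 assume G1: "G1 \<in> regular_graphs n d" and G2: "G2 \<in> regular_graphs n d" and eq: "phi n G1 = phi n G2"
  have key: "e \<in> G \<longleftrightarrow> (\<exists>a b. e = {a,b} \<and> a \<in> {1..n} \<and> b \<in> phi n G a)" if G: "G \<in> regular_graphs n d" for G e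
  proof
    assume e: "e \<in> G"
    then have "card e = 2" "e \<subseteq> {1..n}" using reg_sub[OF G] by auto
    then obtain a b where ab: "e = {a,b}" "a < b"
      by (auto simp: card_2_iff) (metis insert_commute linorder_neqE_nat)
    then show "\<exists>a b. e = {a,b} \<and> a \<in> {1..n} \<and> b \<in> phi n G a"
      using e \<open>e \<subseteq> {1..n}\<close> by (intro exI[of _ a] exI[of _ b]) (auto simp: phi_def Fs_def)
  next
    assume "\<exists>a b. e = {a,b} \<and> a \<in> {1..n} \<and> b \<in> phi n G a"
    then show "e \<in> G" by (auto simp: phi_def Fs_def)
  qed
  show "G1 = G2"
  proof (rule set_eqI)
    fix e show "e \<in> G1 \<longleftrightarrow> e \<in> G2" unfolding key[OF G1] key[OF G2] eq ..
  qed
qed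

lemma finite_reg: "finite (regular_graphs n d)"
  by (rule finite_subset[of _ "Pow (Pow {1..n})"]) (auto simp: regular_graphs_def)

lemma enc_bound:
  fixes A y :: real
  assumes A: "A \<ge> 1" and y: "y \<ge> 0"
  shows "(\<Sum>G\<in>regular_graphs n d. A ^ ell (\<lambda>x. x) G * y ^ card G) \<le> exp (y * n + y * (A - 1) * (d*d)) ^ n"
proof -
  let ?P = "PiE {1..n} (\<lambda>v. Pow {v<..n})"
  have "(\<Sum>G\<in>regular_graphs n d. A ^ ell (\<lambda>x. x) G * y ^ card G)
      = (\<Sum>G\<in>regular_graphs n d. \<Prod>v\<in>{1..n}. Wt d A y (phi n G) v)"
    by (rule sum.cong[OF refl], rule prod_Wt[symmetric])
  also have "\<dots> = (\<Sum>F\<in>phi n ` regular_graphs n d. \<Prod>v\<in>{1..n}. Wt d A y F v)"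
    by (subst sum.reindex[OF phi_inj]) (simp add: o_def)
  also have "\<dots> \<le> (\<Sum>F\<in>?P. \<Prod>v\<in>{1..n}. Wt d A y F v)"
  proof (rule sum_mono2)
    show "finite ?P" by (rule finite_PiE) auto
    show "phi n ` regular_graphs n d \<subseteq> ?P"
    proof
      fix F assume "F \<in> phi n ` regular_graphs n d"
      then obtain G where G: "G \<in> regular_graphs n d" "F = phi n G" by auto
      show "F \<in> ?P" unfolding G(2) phi_def restrict_PiE_iff
        using reg_sub[OF G(1)] by (auto simp: Fs_def)
    qed
    show "\<And>b. b \<in> ?P - phi n ` regular_graphs n d \<Longrightarrow> 0 \<le> (\<Prod>v\<in>{1..n}. Wt d A y b v)"
      using A y by (auto intro!: prod_nonneg simp: Wt_def)
  qed
  also have "\<dots> \<le> exp (y * n + y * (A - 1) * (d*d)) ^ n"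
  proof (rule seq_bound[where S = "\<lambda>v. {v<..n}" and n = n])
    show "\<And>F v. 0 \<le> Wt d A y F v" using A y by (auto simp: Wt_def)
    show "\<And>F F' v. 1 \<le> v \<Longrightarrow> (\<And>u. u \<in> {1..v} \<Longrightarrow> F u = F' u) \<Longrightarrow> Wt d A y F v = Wt d A y F' v"
      by (rule Wt_local) auto
    show "\<And>F v. v \<in> {1..n} \<Longrightarrow> (\<Sum>X\<in>Pow {v<..n}. Wt d A y (F(v := X)) v) \<le> exp (y * n + y * (A - 1) * (d*d))"
      by (rule vertex_sum_bound[OF A y])
  qed auto
  finally show ?thesis .
qed


definition Qm :: "nat \<Rightarrow> nat set \<Rightarrow> nat \<Rightarrow> (nat \<Rightarrow> nat) set" where
  "Qm n X z = {\<sigma>. \<sigma> permutes {1..n} \<and> (\<forall>y\<in>X-{z}. \<sigma> z < \<sigma> y)}"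

lemma Qm_disj:
  assumes "z \<in> X" "z' \<in> X" "z \<noteq> z'" shows "Qm n X z \<inter> Qm n X z' = {}"
proof -
  { fix \<sigma> assume "\<sigma> \<in> Qm n X z" "\<sigma> \<in> Qm n X z'"
    then have "\<sigma> z < \<sigma> z'" "\<sigma> z' < \<sigma> z" using assms unfolding Qm_def by auto
    then have False by simp }
  then show ?thesis by blast
qed

lemma Qm_ex:
  assumes "finite X" "X \<noteq> {}" "\<sigma> permutes {1..n}"
  shows "\<exists>z\<in>X. \<sigma> \<in> Qm n X z"
proof -
  have inj: "inj \<sigma>" using assms(3) by (rule permutes_inj)
  have "Min (\<sigma> ` X) \<in> \<sigma> ` X" using Min_in[of "\<sigma> ` X"] assms(1,2) by auto
  then obtain z where z: "z \<in> X" "\<sigma> z = Min (\<sigma> ` X)" by auto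
  have "\<forall>y\<in>X-{z}. \<sigma> z < \<sigma> y"
  proof
    fix y assume y: "y \<in> X - {z}"
    then have "\<sigma> z \<le> \<sigma> y" using z assms(1) by simp
    moreover have "\<sigma> z \<noteq> \<sigma> y" using inj y by (auto dest: injD)
    ultimately show "\<sigma> z < \<sigma> y" by simp
  qed
  then have "\<sigma> \<in> Qm n X z" using assms(3) unfolding Qm_def by auto
  then show ?thesis using z(1) by blast
qed

lemma Qm_le:
  assumes "z \<in> X" "z' \<in> X" "X \<subseteq> {1..n}"
  shows "card (Qm n X z) \<le> card (Qm n X z')"
proof -
  let ?t = "Transposition.transpose z z'"
  have "inj_on (\<lambda>\<sigma>. \<sigma> \<circ> ?t) (Qm n X z)"
  proof (rule inj_onI)
    fix s1 s2 assume "s1 \<circ> ?t = s2 \<circ> ?t"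
    then have "s1 \<circ> ?t \<circ> ?t = s2 \<circ> ?t \<circ> ?t" by simp
    then show "s1 = s2" by (simp add: comp_assoc)
  qed
  moreover have "(\<lambda>\<sigma>. \<sigma> \<circ> ?t) ` Qm n X z \<subseteq> Qm n X z'"
  proof
    fix s assume "s \<in> (\<lambda>\<sigma>. \<sigma> \<circ> ?t) ` Qm n X z"
    then obtain \<sigma> where \<sigma>: "\<sigma> \<in> Qm n X z" "s = \<sigma> \<circ> ?t" by auto
    have p: "\<sigma> permutes {1..n}" using \<sigma> unfolding Qm_def by auto
    have lt: "\<forall>y\<in>X-{z}. \<sigma> z < \<sigma> y" using \<sigma> unfolding Qm_def by auto
    have "\<forall>y\<in>X-{z'}. s z' < s y"
    proof
      fix y assume y: "y \<in> X - {z'}"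
      show "s z' < s y"
      proof (cases "y = z")
        case True then show ?thesis using \<sigma>(2) lt assms y by auto
      next
        case False
        then show ?thesis using \<sigma>(2) lt y by auto
      qed
    qed
    moreover have "s permutes {1..n}"
      unfolding \<sigma>(2) by (rule permutes_compose[OF permutes_swap_id p]) (use assms in auto)
    ultimately show "s \<in> Qm n X z'" unfolding Qm_def by auto
  qed
  moreover have "finite (Qm n X z')"
    by (rule finite_subset[OF _ finite_permutations[of "{1..n}"]]) (auto simp: Qm_def)
  ultimately show ?thesis by (rule card_inj_on_le)
qed

lemma Qm_card:
  assumes X: "X \<subseteq> {1..n}" "z \<in> X"
  shows "card X * card (Qm n X z) = fact n"
proof -
  have fX: "finite X" using X finite_subset by blast
  have eq: "card (Qm n X z') = card (Qm n X z)" if "z' \<in> X" for z'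
    using Qm_le[of z X z' n] Qm_le[of z' X z n] that X by auto
  have "{\<sigma>. \<sigma> permutes {1..n}} = (\<Union>z'\<in>X. Qm n X z')"
  proof (intro equalityI subsetI)
    fix \<sigma> assume "\<sigma> \<in> {\<sigma>. \<sigma> permutes {1..n}}"
    then show "\<sigma> \<in> (\<Union>z'\<in>X. Qm n X z')" using Qm_ex[OF fX, of \<sigma> n] X by auto
  qed (auto simp: Qm_def)
  then have "fact n = card (\<Union>z'\<in>X. Qm n X z')"
    by (metis card_permutations card_atLeastAtMost diff_Suc_1 finite_atLeastAtMost)
  also have "\<dots> = (\<Sum>z'\<in>X. card (Qm n X z'))"
  proof (rule card_UN_disjoint[OF fX])
    show "\<forall>i\<in>X. finite (Qm n X i)"
      by (auto intro: finite_subset[OF _ finite_permutations[of "{1..n}"]] simp: Qm_def)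
    show "\<forall>i\<in>X. \<forall>j\<in>X. i \<noteq> j \<longrightarrow> Qm n X i \<inter> Qm n X j = {}" using Qm_disj by blast
  qed
  also have "\<dots> = card X * card (Qm n X z)" using eq by simp
  finally show ?thesis by simp
qed

definition Kc :: "nat set set \<Rightarrow> nat set \<Rightarrow> nat set" where
  "Kc G e = {u. \<forall>x\<in>e. {u,x} \<in> G}"

lemma Kc_facts:
  assumes G: "G \<in> regular_graphs n d" and e: "e \<in> G"
  shows "Kc G e \<subseteq> {1..n}" "Kc G e \<inter> e = {}" "card (Kc G e) + 2 \<le> d + 1"
proof -
  obtain a b where ab: "e = {a,b}" "a \<noteq> b" using reg_sub[OF G] e by (auto simp: card_2_iff)
  have ea: "{a,b} \<in> G" using e ab by simp
  show "Kc G e \<subseteq> {1..n}"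
  proof
    fix u assume "u \<in> Kc G e" then have "{u,a} \<in> G" using ab unfolding Kc_def by auto
    then show "u \<in> {1..n}" using edge_in[OF G] by blast
  qed
  show "Kc G e \<inter> e = {}"
  proof (rule ccontr)
    assume "Kc G e \<inter> e \<noteq> {}"
    then obtain u where u: "u \<in> e" "\<forall>x\<in>e. {u,x} \<in> G" unfolding Kc_def by auto
    then have "{u,u} \<in> G" by auto
    then show False using edge_in[OF G] by blast
  qed
  have sub: "Kc G e \<subseteq> {w. {a,w} \<in> G} - {b}"
  proof
    fix u assume "u \<in> Kc G e" then have u: "{u,a} \<in> G" "{u,b} \<in> G" using ab unfolding Kc_def by auto
    then have "u \<noteq> b" using edge_in[OF G] by blast
    then show "u \<in> {w. {a,w} \<in> G} - {b}" using u by (auto simp: insert_commute)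
  qed
  have fin: "finite {w. {a,w} \<in> G}" using nbrs_sub[OF G, of a] by (meson finite_atLeastAtMost finite_subset)
  have "card ({w. {a,w} \<in> G} - {b}) = d - 1"
    using nbrs_card[OF G, of a] edge_in[OF G ea] ea fin by simp
  moreover have "d \<ge> 1" using nbrs_card[OF G, of a] edge_in[OF G ea] ea fin
    by (metis (mono_tags, lifting) One_nat_def card_0_eq empty_iff less_one mem_Collect_eq not_le)
  ultimately show "card (Kc G e) + 2 \<le> d + 1"
    using card_mono[OF _ sub] fin by (metis finite_Diff add_le_mono1 le_diff_conv add.commute one_add_one add.left_commute le_add_diff_inverse)
qed


lemma locE_count:
  assumes G: "G \<in> regular_graphs n d" and e: "e \<in> G"
  shows "real (card {\<sigma>. \<sigma> permutes {1..n} \<and> locE \<sigma> G e}) * (card (Kc G e) + 2) = fact n * card (Kc G e)"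
proof -
  let ?K = "Kc G e"
  define X where "X = ?K \<union> e"
  have esub: "e \<subseteq> {1..n}" "card e = 2" using reg_sub[OF G] e by auto
  have fe: "finite e" using esub by (meson finite_atLeastAtMost finite_subset)
  have Ksub: "?K \<subseteq> {1..n}" and Kdisj: "?K \<inter> e = {}" using Kc_facts[OF G e] by auto
  have fK: "finite ?K" using Ksub by (meson finite_atLeastAtMost finite_subset)
  have Xsub: "X \<subseteq> {1..n}" using Ksub esub unfolding X_def by auto
  have fX: "finite X" unfolding X_def using fK fe by auto
  have cX: "card X = card ?K + 2" unfolding X_def using card_Un_disjoint[OF fK fe Kdisj] esub by simp
  obtain x0 where x0: "x0 \<in> e" using esub by (cases "e = {}") auto
  have Xne: "X \<noteq> {}" using x0 unfolding X_def by auto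
  define q where "q = card (Qm n X x0)"
  have qX: "card (Qm n X z) = q" if "z \<in> X" for z
  proof -
    have "card X * card (Qm n X z) = card X * q"
      using Qm_card[OF Xsub that] Qm_card[OF Xsub, of x0] x0 unfolding q_def X_def by simp
    moreover have "card X \<noteq> 0" using cX by simp
    ultimately show ?thesis by simp
  qed
  have eqs: "{\<sigma>. \<sigma> permutes {1..n} \<and> locE \<sigma> G e} = (\<Union>u\<in>?K. Qm n X u)"
  proof (intro equalityI subsetI)
    fix \<sigma> assume "\<sigma> \<in> {\<sigma>. \<sigma> permutes {1..n} \<and> locE \<sigma> G e}"
    then have p: "\<sigma> permutes {1..n}" and "locE \<sigma> G e" by auto
    then obtain u where u: "\<forall>x\<in>e. {u,x} \<in> G \<and> \<sigma> u < \<sigma> x" unfolding locE_def by auto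
    then have uK: "u \<in> ?K" unfolding Kc_def by auto
    obtain z where z: "z \<in> X" "\<sigma> \<in> Qm n X z" using Qm_ex[OF fX Xne p] by auto
    have "z \<in> ?K"
    proof (rule ccontr)
      assume "z \<notin> ?K"
      then have ze: "z \<in> e" using z unfolding X_def by auto
      then have "z \<noteq> u" using uK Kdisj by auto
      then have "\<sigma> z < \<sigma> u" using z uK unfolding Qm_def X_def by auto
      moreover have "\<sigma> u < \<sigma> z" using u ze by auto
      ultimately show False by simp
    qed
    then show "\<sigma> \<in> (\<Union>u\<in>?K. Qm n X u)" using z by auto
  next
    fix \<sigma> assume "\<sigma> \<in> (\<Union>u\<in>?K. Qm n X u)"
    then obtain u where u: "u \<in> ?K" "\<sigma> \<in> Qm n X u" by auto
    have "\<forall>x\<in>e. {u,x} \<in> G \<and> \<sigma> u < \<sigma> x"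
    proof
      fix x assume x: "x \<in> e"
      then have "x \<noteq> u" using u Kdisj by auto
      then have "\<sigma> u < \<sigma> x" using u x unfolding Qm_def X_def by auto
      then show "{u,x} \<in> G \<and> \<sigma> u < \<sigma> x" using u x unfolding Kc_def by auto
    qed
    then show "\<sigma> \<in> {\<sigma>. \<sigma> permutes {1..n} \<and> locE \<sigma> G e}" using u unfolding locE_def Qm_def by auto
  qed
  have "card (\<Union>u\<in>?K. Qm n X u) = (\<Sum>u\<in>?K. card (Qm n X u))"
  proof (rule card_UN_disjoint[OF fK])
    show "\<forall>i\<in>?K. finite (Qm n X i)"
      by (auto intro: finite_subset[OF _ finite_permutations[of "{1..n}"]] simp: Qm_def)
    show "\<forall>i\<in>?K. \<forall>j\<in>?K. i \<noteq> j \<longrightarrow> Qm n X i \<inter> Qm n X j = {}"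
      using Qm_disj[of _ X] unfolding X_def by blast
  qed
  also have "\<dots> = card ?K * q" using qX unfolding X_def by simp
  finally have c: "card {\<sigma>. \<sigma> permutes {1..n} \<and> locE \<sigma> G e} = card ?K * q" using eqs by simp
  have "card X * q = fact n" using Qm_card[OF Xsub, of x0] x0 unfolding q_def X_def by auto
  then have h1: "real (card ?K + 2) * real q = fact n" using cX
    by (metis of_nat_fact of_nat_mult)
  have h2: "real (card {\<sigma>. \<sigma> permutes {1..n} \<and> locE \<sigma> G e}) = real (card ?K) * real q" using c by simp
  have h3: "(fact n :: real) = real q * (real (card ?K) + 2)" using h1 by (simp add: algebra_simps)
  show ?thesis using h2 h3 by (simp add: algebra_simps)
qed

lemma card_filter_sum: "finite A \<Longrightarrow> real (card {x\<in>A. P x}) = (\<Sum>x\<in>A. if P x then 1 else 0)"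
  by (simp add: sum.inter_filter[symmetric])

lemma sum_ell:
  assumes G: "G \<in> regular_graphs n d"
  shows "(\<Sum>\<sigma>\<in>{\<sigma>. \<sigma> permutes {1..n}}. real (ell \<sigma> G))
       = fact n * (\<Sum>e\<in>G. card (Kc G e) / (card (Kc G e) + 2))"
proof -
  let ?P = "{\<sigma>. \<sigma> permutes {1..n}}"
  have fG: "finite G" by (rule finite_subset[of _ "Pow {1..n}"]) (use reg_sub[OF G] in auto)
  have fP: "finite ?P" by (rule finite_permutations) auto
  have "(\<Sum>\<sigma>\<in>?P. real (ell \<sigma> G)) = (\<Sum>\<sigma>\<in>?P. \<Sum>e\<in>G. if locE \<sigma> G e then 1 else 0)"
    unfolding ell_def by (rule sum.cong[OF refl], rule card_filter_sum[OF fG])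
  also have "\<dots> = (\<Sum>e\<in>G. \<Sum>\<sigma>\<in>?P. if locE \<sigma> G e then 1 else 0)" by (rule sum.swap)
  also have "\<dots> = (\<Sum>e\<in>G. real (card {\<sigma>. \<sigma> permutes {1..n} \<and> locE \<sigma> G e}))"
  proof (rule sum.cong[OF refl])
    fix e
    have "{\<sigma>. \<sigma> permutes {1..n} \<and> locE \<sigma> G e} = {\<sigma>\<in>?P. locE \<sigma> G e}" by simp
    then show "(\<Sum>\<sigma>\<in>?P. if locE \<sigma> G e then 1 else 0) = real (card {\<sigma>. \<sigma> permutes {1..n} \<and> locE \<sigma> G e})"
      using card_filter_sum[OF fP, of "\<lambda>\<sigma>. locE \<sigma> G e"] by simp
  qed
  also have "\<dots> = (\<Sum>e\<in>G. fact n * (card (Kc G e) / (card (Kc G e) + 2)))"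
  proof (rule sum.cong[OF refl])
    fix e assume e: "e \<in> G"
    have "card (Kc G e) + 2 > (0::real)" by simp
    then show "real (card {\<sigma>. \<sigma> permutes {1..n} \<and> locE \<sigma> G e}) = fact n * (card (Kc G e) / (card (Kc G e) + 2))"
      using locE_count[OF G e] by (simp add: field_simps)
  qed
  also have "\<dots> = fact n * (\<Sum>e\<in>G. card (Kc G e) / (card (Kc G e) + 2))"
    by (simp add: sum_distrib_left)
  finally show ?thesis .
qed


lemma tri_finite:
  assumes G: "G \<in> regular_graphs n d"
  shows "triangles G \<subseteq> Pow {1..n}"
proof
  fix T assume T: "T \<in> triangles G"
  then have cT: "card T = 3" and all: "\<And>e. e \<subseteq> T \<Longrightarrow> card e = 2 \<Longrightarrow> e \<in> G" unfolding triangles_def by auto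
  have fT: "finite T" using cT by (metis card.infinite zero_neq_numeral)
  show "T \<in> Pow {1..n}"
  proof (rule PowI, rule subsetI)
    fix x assume x: "x \<in> T"
    have "card (T - {x}) = 2" using cT x fT by simp
    then have "T - {x} \<noteq> {}" by (metis card.empty zero_neq_numeral)
    then obtain y where y: "y \<in> T" "y \<noteq> x" by blast
    then have "{x,y} \<in> G" using x by (intro all) auto
    then show "x \<in> {1..n}" using edge_in[OF G] by blast
  qed
qed

lemma tri_bound:
  assumes G: "G \<in> regular_graphs n d"
  shows "3 * card (triangles G) \<le> (\<Sum>e\<in>G. card (Kc G e))"
proof -
  let ?T = "triangles G"
  define S1 where "S1 = Sigma ?T (\<lambda>T. {e. e \<subseteq> T \<and> card e = 2})"
  have fG: "finite G" by (rule finite_subset[of _ "Pow {1..n}"]) (use reg_sub[OF G] in auto)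
  have fK: "finite (Kc G e)" if "e \<in> G" for e using Kc_facts(1)[OF G that] by (meson finite_atLeastAtMost finite_subset)
  have fT: "finite ?T" using tri_finite[OF G] by (meson finite_Pow_iff finite_atLeastAtMost finite_subset)
  have cT: "card T = 3" "finite T" if "T \<in> ?T" for T
    using that unfolding triangles_def by (auto intro: card_ge_0_finite)
  have "card S1 = (\<Sum>T\<in>?T. card {e. e \<subseteq> T \<and> card e = 2})"
    unfolding S1_def by (rule card_SigmaI) (use fT cT in auto)
  also have "\<dots> = (\<Sum>T\<in>?T. 3)"
    by (rule sum.cong[OF refl]) (simp add: n_subsets cT choose_two)
  finally have c1: "card S1 = 3 * card ?T" by simp
  define f where "f = (\<lambda>(T::nat set, e::nat set). (e, the_elem (T - e)))"
  have key: "T - e = {the_elem (T - e)}" if "(T,e) \<in> S1" for T e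
  proof -
    have h: "T \<in> ?T" "e \<subseteq> T" "card e = 2" using that unfolding S1_def by auto
    then have "finite e" using cT(2) finite_subset by blast
    then have "card (T - e) = 1" using h cT card_Diff_subset[of e T] by simp
    then obtain u where "T - e = {u}" by (auto simp: card_1_singleton_iff)
    then show ?thesis by simp
  qed
  have "inj_on f S1"
  proof (rule inj_onI)
    fix p q assume p: "p \<in> S1" and q: "q \<in> S1" and eq: "f p = f q"
    obtain T e where pe: "p = (T,e)" by (cases p)
    obtain T' e' where qe: "q = (T',e')" by (cases q)
    have "e = e'" "the_elem (T - e) = the_elem (T' - e')" using eq unfolding pe qe f_def by auto
    moreover have "T = e \<union> (T - e)" "T' = e' \<union> (T' - e')" using p q unfolding pe qe S1_def by auto
    ultimately show "p = q" using key[of T e] key[of T' e'] p q unfolding pe qe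
      by (metis (no_types, lifting))
  qed
  moreover have "f ` S1 \<subseteq> Sigma G (Kc G)"
  proof
    fix r assume "r \<in> f ` S1"
    then obtain T e where Te: "(T,e) \<in> S1" "r = (e, the_elem (T - e))" unfolding f_def by auto
    define u where "u = the_elem (T - e)"
    have u: "u \<in> T" "u \<notin> e" using key[OF Te(1)] unfolding u_def by auto
    have allT: "\<And>e'. e' \<subseteq> T \<Longrightarrow> card e' = 2 \<Longrightarrow> e' \<in> G" and eT: "e \<subseteq> T" "card e = 2"
      using Te(1) unfolding S1_def triangles_def by auto
    have "e \<in> G" using allT eT by auto
    moreover have "u \<in> Kc G e"
      unfolding Kc_def
    proof
      show "\<forall>x\<in>e. {u, x} \<in> G"
      proof
        fix x assume x: "x \<in> e"
        then have "u \<noteq> x" using u by auto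
        then show "{u,x} \<in> G" using allT[of "{u,x}"] u x eT by auto
      qed
    qed
    ultimately show "r \<in> Sigma G (Kc G)" using Te(2) unfolding u_def by auto
  qed
  moreover have "finite (Sigma G (Kc G))" using fG fK by auto
  ultimately have "card S1 \<le> card (Sigma G (Kc G))" by (rule card_inj_on_le)
  also have "\<dots> = (\<Sum>e\<in>G. card (Kc G e))" by (rule card_SigmaI) (use fG fK in auto)
  finally show ?thesis using c1 by simp
qed

lemma exp_avg:
  fixes t :: "'a \<Rightarrow> real"
  assumes "finite I" "I \<noteq> {}"
  shows "card I * exp ((\<Sum>i\<in>I. t i) / card I) \<le> (\<Sum>i\<in>I. exp (t i))"
proof -
  define m where "m = (\<Sum>i\<in>I. t i) / card I"
  have cI: "real (card I) > 0" using assms by (simp add: card_gt_0_iff)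
  have "exp (t i) \<ge> exp m * (1 + (t i - m))" for i
  proof -
    have "exp (t i) = exp m * exp (t i - m)" by (simp add: exp_diff)
    moreover have "1 + (t i - m) \<le> exp (t i - m)" by (rule exp_ge_add_one_self)
    ultimately show ?thesis by simp
  qed
  then have "(\<Sum>i\<in>I. exp m * (1 + (t i - m))) \<le> (\<Sum>i\<in>I. exp (t i))" by (rule sum_mono)
  moreover have "(\<Sum>i\<in>I. exp m * (1 + (t i - m))) = exp m * (card I + (\<Sum>i\<in>I. t i) - card I * m)"
    by (simp add: sum_distrib_left[symmetric] sum.distrib sum_subtractf)
  moreover have "card I * m = (\<Sum>i\<in>I. t i)" unfolding m_def using cI by simp
  ultimately show ?thesis unfolding m_def by (simp add: algebra_simps)
qed


lemma img_comp: "img f (img g G) = img (f \<circ> g) G"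
  unfolding img_def by (auto simp: image_comp)

lemma img_id: "img id G = G"
  unfolding img_def by simp

lemma ell_relabel:
  assumes p: "\<sigma> permutes {1..n}"
  shows "ell \<sigma> G = ell (\<lambda>x. x) (img \<sigma> G)"
proof -
  have inj: "inj \<sigma>" using p by (rule permutes_inj)
  have injI: "inj (image \<sigma>)" using inj by (simp add: inj_on_def inj_image_eq_iff)
  have mem: "\<sigma> ` e \<in> img \<sigma> G \<longleftrightarrow> e \<in> G" for e
    unfolding img_def using injI by (auto dest: injD)
  have pair: "{\<sigma> u, \<sigma> x} \<in> img \<sigma> G \<longleftrightarrow> {u,x} \<in> G" for u x
    using mem[of "{u,x}"] by simp
  have iff: "locE (\<lambda>x. x) (img \<sigma> G) (\<sigma> ` e) \<longleftrightarrow> locE \<sigma> G e" for e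
  proof
    assume "locE (\<lambda>x. x) (img \<sigma> G) (\<sigma> ` e)"
    then obtain u' where u': "\<forall>x'\<in>\<sigma> ` e. {u',x'} \<in> img \<sigma> G \<and> u' < x'" unfolding locE_def by auto
    obtain u where "u' = \<sigma> u" using permutes_surj[OF p] by (metis surjD)
    then have "\<forall>x\<in>e. {u,x} \<in> G \<and> \<sigma> u < \<sigma> x" using u' pair by auto
    then show "locE \<sigma> G e" unfolding locE_def by auto
  next
    assume "locE \<sigma> G e"
    then obtain u where u: "\<forall>x\<in>e. {u,x} \<in> G \<and> \<sigma> u < \<sigma> x" unfolding locE_def by auto
    then have "\<forall>x'\<in>\<sigma> ` e. {\<sigma> u,x'} \<in> img \<sigma> G \<and> \<sigma> u < x'" using pair by auto
    then show "locE (\<lambda>x. x) (img \<sigma> G) (\<sigma> ` e)" unfolding locE_def by blast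
  qed
  have eq: "{e'\<in>img \<sigma> G. locE (\<lambda>x. x) (img \<sigma> G) e'} = image \<sigma> ` {e\<in>G. locE \<sigma> G e}"
  proof (intro equalityI subsetI)
    fix e' assume "e' \<in> {e'\<in>img \<sigma> G. locE (\<lambda>x. x) (img \<sigma> G) e'}"
    then obtain e where e: "e \<in> G" "e' = \<sigma> ` e" "locE (\<lambda>x. x) (img \<sigma> G) e'" unfolding img_def by blast
    then have "locE \<sigma> G e" using iff by blast
    then show "e' \<in> image \<sigma> ` {e\<in>G. locE \<sigma> G e}" using e by blast
  next
    fix e' assume "e' \<in> image \<sigma> ` {e\<in>G. locE \<sigma> G e}"
    then obtain e where e: "e \<in> G" "e' = \<sigma> ` e" "locE \<sigma> G e" by blast
    then have "locE (\<lambda>x. x) (img \<sigma> G) e'" using iff by blast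
    moreover have "e' \<in> img \<sigma> G" using e unfolding img_def by blast
    ultimately show "e' \<in> {e'\<in>img \<sigma> G. locE (\<lambda>x. x) (img \<sigma> G) e'}" by blast
  qed
  have "card (image \<sigma> ` {e\<in>G. locE \<sigma> G e}) = card {e\<in>G. locE \<sigma> G e}"
    by (rule card_image) (rule inj_on_subset[OF injI], simp)
  then show ?thesis unfolding ell_def eq by simp
qed

lemma sum_relabel:
  fixes A :: real
  assumes p: "\<sigma> permutes {1..n}"
  shows "(\<Sum>G\<in>regular_graphs n d. A ^ ell \<sigma> G) = (\<Sum>G\<in>regular_graphs n d. A ^ ell (\<lambda>x. x) G)"
proof (rule sum.reindex_bij_witness[where j = "img \<sigma>" and i = "img (inv \<sigma>)"])
  have pi: "inv \<sigma> permutes {1..n}" using p by (rule permutes_inv)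
  have r: "img f G \<in> regular_graphs n d" if "f permutes {1..n}" "G \<in> regular_graphs n d" for f G
    using reg_on_img[of "{1..n}" d G f] that permutes_image[OF that(1)] permutes_inj[OF that(1)]
    by (auto simp: regular_graphs_reg_on inj_on_subset)
  show "\<And>a. a \<in> regular_graphs n d \<Longrightarrow> img (inv \<sigma>) (img \<sigma> a) = a"
    by (simp add: img_comp permutes_inv_o[OF p] img_id)
  show "\<And>b. b \<in> regular_graphs n d \<Longrightarrow> img \<sigma> (img (inv \<sigma>) b) = b"
    by (simp add: img_comp permutes_inv_o[OF p] img_id)
  show "\<And>a. a \<in> regular_graphs n d \<Longrightarrow> img \<sigma> a \<in> regular_graphs n d" using r p by blast
  show "\<And>b. b \<in> regular_graphs n d \<Longrightarrow> img (inv \<sigma>) b \<in> regular_graphs n d" using r pi by blast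
  show "\<And>a. a \<in> regular_graphs n d \<Longrightarrow> A ^ ell (\<lambda>x. x) (img \<sigma> a) = A ^ ell \<sigma> a"
    using ell_relabel[OF p] by simp
qed


lemma G_dc_sub: "G_dc d c n \<subseteq> regular_graphs n d" unfolding G_dc_def by auto

lemma card_reg_edges: "G \<in> regular_graphs n d \<Longrightarrow> card G = d * n div 2"
  using handshake[of "{1..n}" d G] by (simp add: regular_graphs_reg_on)

lemma ell_sum_lower:
  fixes c :: real
  assumes G: "G \<in> G_dc d c n" and d1: "d \<ge> 1"
  shows "fact n * (c * real (d choose 2) * n / (d+1)) \<le> (\<Sum>\<sigma>\<in>{\<sigma>. \<sigma> permutes {1..n}}. real (ell \<sigma> G))"
proof -
  have GR: "G \<in> regular_graphs n d" using G G_dc_sub by blast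
  have tri: "c * T_max n d \<le> card (triangles G)" using G unfolding G_dc_def by auto
  have "c * real (d choose 2) * n / (d+1) = 3 * (c * T_max n d) / (d+1)"
    unfolding T_max_def by simp
  also have "\<dots> \<le> 3 * real (card (triangles G)) / (d+1)"
    using tri by (intro divide_right_mono) auto
  also have "\<dots> \<le> (\<Sum>e\<in>G. real (card (Kc G e))) / (d+1)"
  proof (intro divide_right_mono)
    have "real (3 * card (triangles G)) \<le> real (\<Sum>e\<in>G. card (Kc G e))"
      using tri_bound[OF GR] by linarith
    then show "3 * real (card (triangles G)) \<le> (\<Sum>e\<in>G. real (card (Kc G e)))" by simp
  qed simp
  also have "\<dots> = (\<Sum>e\<in>G. real (card (Kc G e)) / (d+1))" by (simp add: sum_divide_distrib)
  also have "\<dots> \<le> (\<Sum>e\<in>G. card (Kc G e) / (card (Kc G e) + 2))"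
  proof (rule sum_mono)
    fix e assume e: "e \<in> G"
    have "real (card (Kc G e)) + 2 \<le> real d + 1" using Kc_facts(3)[OF GR e] by linarith
    then show "real (card (Kc G e)) / (d+1) \<le> card (Kc G e) / (card (Kc G e) + 2)"
      by (intro divide_left_mono) auto
  qed
  finally have "c * real (d choose 2) * n / (d+1) \<le> (\<Sum>e\<in>G. card (Kc G e) / (card (Kc G e) + 2))" .
  then have "fact n * (c * real (d choose 2) * n / (d+1)) \<le> fact n * (\<Sum>e\<in>G. card (Kc G e) / (card (Kc G e) + 2))"
    by (intro mult_left_mono) auto
  also have "\<dots> = (\<Sum>\<sigma>\<in>{\<sigma>. \<sigma> permutes {1..n}}. real (ell \<sigma> G))" using sum_ell[OF GR] by simp
  finally show ?thesis .
qed

lemma exp_pow: "A > 0 \<Longrightarrow> exp (real k * ln A) = A ^ k"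
  by (simp add: exp_of_nat_mult)

theorem upper_main:
  fixes c A y :: real and n d :: nat
  assumes d1: "d \<ge> 1" and c: "c > 0" and A: "A \<ge> 1" and y: "y > 0"
  shows "real (card (G_dc d c n)) * exp ((c * real (d choose 2) * n / (d+1)) * ln A) * y ^ (d*n div 2)
         \<le> exp (y*n + y*(A-1)*(d*d)) ^ n"
proof -
  define \<mu> where "\<mu> = c * real (d choose 2) * n / (d+1)"
  let ?P = "{\<sigma>. \<sigma> permutes {1..n}}"
  let ?R = "regular_graphs n d"
  have fP: "finite ?P" by (rule finite_permutations) auto
  have cP: "card ?P = fact n" by (simp add: card_permutations)
  have Pne: "?P \<noteq> {}" using permutes_id[of "{1..n}"] by blast
  have lnA: "ln A \<ge> 0" using A by simp
  have A0: "A > 0" using A by simp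
  have step1: "fact n * exp (\<mu> * ln A) \<le> (\<Sum>\<sigma>\<in>?P. A ^ ell \<sigma> G)" if G: "G \<in> G_dc d c n" for G
  proof -
    have "fact n * \<mu> \<le> (\<Sum>\<sigma>\<in>?P. real (ell \<sigma> G))" unfolding \<mu>_def by (rule ell_sum_lower[OF G d1])
    then have h1: "fact n * \<mu> * ln A \<le> (\<Sum>\<sigma>\<in>?P. real (ell \<sigma> G)) * ln A"
      using lnA by (rule mult_right_mono)
    have h: "(\<Sum>\<sigma>\<in>?P. real (ell \<sigma> G) * ln A) = (\<Sum>\<sigma>\<in>?P. real (ell \<sigma> G)) * ln A"
      by (simp add: sum_distrib_right)
    have "\<mu> * ln A = (fact n * \<mu> * ln A) / fact n" by simp
    also have "\<dots> \<le> ((\<Sum>\<sigma>\<in>?P. real (ell \<sigma> G)) * ln A) / fact n"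
      by (rule divide_right_mono[OF h1]) simp
    also have "\<dots> = (\<Sum>\<sigma>\<in>?P. real (ell \<sigma> G) * ln A) / card ?P" using h cP by simp
    finally have "\<mu> * ln A \<le> (\<Sum>\<sigma>\<in>?P. real (ell \<sigma> G) * ln A) / card ?P" .
    then have "fact n * exp (\<mu> * ln A) \<le> card ?P * exp ((\<Sum>\<sigma>\<in>?P. real (ell \<sigma> G) * ln A) / card ?P)"
      using cP by simp
    also have "\<dots> \<le> (\<Sum>\<sigma>\<in>?P. exp (real (ell \<sigma> G) * ln A))" by (rule exp_avg[OF fP Pne])
    also have "\<dots> = (\<Sum>\<sigma>\<in>?P. A ^ ell \<sigma> G)" using exp_pow[OF A0] by simp
    finally show ?thesis .
  qed
  have fR: "finite ?R" by (rule finite_reg)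
  have fD: "finite (G_dc d c n)" using finite_subset[OF G_dc_sub fR] .
  have "real (card (G_dc d c n)) * (fact n * exp (\<mu> * ln A)) = (\<Sum>G\<in>G_dc d c n. fact n * exp (\<mu> * ln A))"
    by simp
  also have "\<dots> \<le> (\<Sum>G\<in>G_dc d c n. \<Sum>\<sigma>\<in>?P. A ^ ell \<sigma> G)" by (rule sum_mono) (rule step1)
  also have "\<dots> \<le> (\<Sum>G\<in>?R. \<Sum>\<sigma>\<in>?P. A ^ ell \<sigma> G)"
    by (rule sum_mono2[OF fR G_dc_sub]) (use A in \<open>auto intro!: sum_nonneg\<close>)
  also have "\<dots> = (\<Sum>\<sigma>\<in>?P. \<Sum>G\<in>?R. A ^ ell \<sigma> G)" by (rule sum.swap)
  also have "\<dots> = (\<Sum>\<sigma>\<in>?P. \<Sum>G\<in>?R. A ^ ell (\<lambda>x. x) G)"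
    by (rule sum.cong[OF refl]) (simp add: sum_relabel)
  also have "\<dots> = fact n * (\<Sum>G\<in>?R. A ^ ell (\<lambda>x. x) G)" using cP by simp
  finally have s1: "real (card (G_dc d c n)) * (fact n * exp (\<mu> * ln A)) \<le> fact n * (\<Sum>G\<in>?R. A ^ ell (\<lambda>x. x) G)" .
  have "(\<Sum>G\<in>?R. A ^ ell (\<lambda>x. x) G) * y ^ (d*n div 2) = (\<Sum>G\<in>?R. A ^ ell (\<lambda>x. x) G * y ^ card G)"
    by (simp add: sum_distrib_right card_reg_edges)
  also have "\<dots> \<le> exp (y*n + y*(A-1)*(d*d)) ^ n" by (rule enc_bound) (use A y in auto)
  finally have s2: "(\<Sum>G\<in>?R. A ^ ell (\<lambda>x. x) G) * y ^ (d*n div 2) \<le> exp (y*n + y*(A-1)*(d*d)) ^ n" .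
  have fpos: "(fact n :: real) > 0" by simp
  have "fact n * (real (card (G_dc d c n)) * exp (\<mu> * ln A) * y ^ (d*n div 2))
        = (real (card (G_dc d c n)) * (fact n * exp (\<mu> * ln A))) * y ^ (d*n div 2)" by (simp add: algebra_simps)
  also have "\<dots> \<le> (fact n * (\<Sum>G\<in>?R. A ^ ell (\<lambda>x. x) G)) * y ^ (d*n div 2)"
    by (rule mult_right_mono[OF s1]) (use y in simp)
  also have "\<dots> \<le> fact n * exp (y*n + y*(A-1)*(d*d)) ^ n"
    using s2 fpos by (simp add: mult.assoc)
  finally show ?thesis unfolding \<mu>_def using fpos by (simp add: mult_le_cancel_left_pos)
qed


lemma reg_from_rel:
  fixes R :: "'a \<Rightarrow> 'a \<Rightarrow> bool"
  assumes sym: "\<And>u v. R u v \<Longrightarrow> R v u" and irr: "\<And>u. \<not> R u u"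
    and inV: "\<And>u v. R u v \<Longrightarrow> u \<in> V" and deg: "\<And>v. v \<in> V \<Longrightarrow> card {w. R v w} = d"
  shows "reg_on V d {{u,v} | u v. R u v}"
proof -
  let ?G = "{{u,v} | u v. R u v}"
  have edge: "{v,w} \<in> ?G \<longleftrightarrow> R v w" for v w
  proof
    assume "{v,w} \<in> ?G"
    then obtain u u' where "{v,w} = {u,u'}" "R u u'" by auto
    then show "R v w" using sym by (auto simp: doubleton_eq_iff)
  qed auto
  have sub: "?G \<subseteq> {e. e \<subseteq> V \<and> card e = 2}"
  proof
    fix e assume "e \<in> ?G"
    then obtain u v where e: "e = {u,v}" "R u v" by auto
    then have "u \<noteq> v" using irr by auto
    then show "e \<in> {e. e \<subseteq> V \<and> card e = 2}" using e inV sym by auto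
  qed
  have "card {e\<in>?G. v \<in> e} = d" if v: "v \<in> V" for v
  proof -
    have "card {e\<in>?G. v \<in> e} = card {w. {v,w} \<in> ?G}" by (rule deg_nbrs) (use sub in auto)
    also have "\<dots> = card {w. R v w}" using edge by simp
    finally show ?thesis using deg[OF v] by simp
  qed
  then show ?thesis unfolding reg_on_def using sub by blast
qed

lemma edge_rel:
  assumes sym: "\<And>u v. R u v \<Longrightarrow> R v u"
  shows "{v,w} \<in> {{u,v} | u v. R u v} \<longleftrightarrow> R v w"
proof
  assume "{v,w} \<in> {{u,v} | u v. R u v}"
  then obtain u u' where "{v,w} = {u,u'}" "R u u'" by auto
  then show "R v w" using sym by (auto simp: doubleton_eq_iff)
qed auto

definition beta :: "(nat \<Rightarrow> nat \<Rightarrow> nat) \<Rightarrow> nat \<Rightarrow> nat \<Rightarrow> nat" where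
  "beta S j t = (if t = 0 then j else inv (S t) j)"
definition gam :: "(nat \<Rightarrow> nat \<Rightarrow> nat) \<Rightarrow> nat \<Rightarrow> nat \<Rightarrow> nat" where
  "gam S b t = (if t = 0 then b else S t b)"

definition Rel :: "nat \<Rightarrow> nat \<Rightarrow> nat \<Rightarrow> nat \<Rightarrow> (nat \<Rightarrow> nat \<Rightarrow> nat) \<Rightarrow> (nat \<times> nat \<Rightarrow> nat \<Rightarrow> nat)
    \<Rightarrow> nat \<times> nat \<times> nat \<Rightarrow> nat \<times> nat \<times> nat \<Rightarrow> bool" where
  "Rel k d s m S P u v \<longleftrightarrow>
     (\<exists>j t j' t'. u = (0,j,t) \<and> v = (0,j',t') \<and> j<k \<and> j'<k \<and> t\<le>d \<and> t'\<le>d \<and> (j,t) \<noteq> (j',t') \<and> beta S j t = beta S j' t') \<or>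
     (\<exists>i i' x y. i<d \<and> i'<d \<and> x<s \<and> y<s \<and> y = P (i,i') x \<and> ((u = (1,i,x) \<and> v = (2,i',y)) \<or> (v = (1,i,x) \<and> u = (2,i',y)))) \<or>
     (\<exists>x y. x<m \<and> y<m \<and> (y+m-x) mod m < d \<and> ((u = (3,x,0) \<and> v = (4,y,0)) \<or> (v = (3,x,0) \<and> u = (4,y,0))))"

definition Vset :: "nat \<Rightarrow> nat \<Rightarrow> nat \<Rightarrow> nat \<Rightarrow> (nat \<times> nat \<times> nat) set" where
  "Vset k d s m = ({0}\<times>{..<k}\<times>{..d}) \<union> ({1}\<times>{..<d}\<times>{..<s}) \<union> ({2}\<times>{..<d}\<times>{..<s}) \<union> ({3}\<times>{..<m}\<times>{0}) \<union> ({4}\<times>{..<m}\<times>{0})"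

definition Gr :: "nat \<Rightarrow> nat \<Rightarrow> nat \<Rightarrow> nat \<Rightarrow> (nat \<Rightarrow> nat \<Rightarrow> nat) \<Rightarrow> (nat \<times> nat \<Rightarrow> nat \<Rightarrow> nat) \<Rightarrow> (nat \<times> nat \<times> nat) set set" where
  "Gr k d s m S P = {{u,v} | u v. Rel k d s m S P u v}"

lemma card_Vset: "card (Vset k d s m) = k*(d+1) + 2*d*s + 2*m"
proof -
  have "card (Vset k d s m) = card ({0::nat}\<times>{..<k}\<times>{..d}) + card ({1::nat}\<times>{..<d}\<times>{..<s}) + card ({2::nat}\<times>{..<d}\<times>{..<s}) + card ({3::nat}\<times>{..<m}\<times>{0::nat}) + card ({4::nat}\<times>{..<m}\<times>{0::nat})"
    unfolding Vset_def by (subst card_Un_disjoint, auto)+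
  then show ?thesis by (simp add: card_cartesian_product)
qed

lemma Rel_sym: "Rel k d s m S P u v \<Longrightarrow> Rel k d s m S P v u"
  unfolding Rel_def by (elim disjE exE conjE; metis)

lemma Rel_irr: "\<not> Rel k d s m S P u u"
  unfolding Rel_def by auto

lemma Rel_V: "Rel k d s m S P u v \<Longrightarrow> u \<in> Vset k d s m"
  unfolding Rel_def Vset_def by auto


lemma gb:
  assumes HS: "\<forall>t\<in>{1..d}. S t permutes {..<k}" and b: "b < k" and t: "t \<le> d"
  shows "gam S b t < k \<and> beta S (gam S b t) t = b"
proof (cases "t = 0")
  case True then show ?thesis using b by (simp add: gam_def beta_def)
next
  case False
  then have p: "S t permutes {..<k}" using HS t by auto
  show ?thesis using False b permutes_in_image[OF p, of b] permutes_inverses[OF p]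
    by (simp add: gam_def beta_def)
qed

lemma bg:
  assumes HS: "\<forall>t\<in>{1..d}. S t permutes {..<k}" and j: "j < k" and t: "t \<le> d"
  shows "beta S j t < k \<and> gam S (beta S j t) t = j"
proof (cases "t = 0")
  case True then show ?thesis using j by (simp add: gam_def beta_def)
next
  case False
  then have p: "S t permutes {..<k}" using HS t by auto
  have pi: "inv (S t) permutes {..<k}" using p by (rule permutes_inv)
  show ?thesis using False j permutes_in_image[OF pi, of j] permutes_inverses[OF p]
    by (simp add: gam_def beta_def)
qed

lemma beta_iff:
  assumes HS: "\<forall>t\<in>{1..d}. S t permutes {..<k}" and "j' < k" "t' \<le> d" "b < k"
  shows "beta S j' t' = b \<longleftrightarrow> j' = gam S b t'"
  using gb[OF HS, of b t'] bg[OF HS, of j' t'] assms by auto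

lemma deg_clique:
  assumes HS: "\<forall>t\<in>{1..d}. S t permutes {..<k}" and j: "j < k" and t: "t \<le> d"
  shows "card {w. Rel k d s m S P (0,j,t) w} = d"
proof -
  define b where "b = beta S j t"
  have b: "b < k" "gam S b t = j" using bg[OF HS j t] unfolding b_def by auto
  have eq: "{w. Rel k d s m S P (0,j,t) w} = (\<lambda>t'. (0::nat, gam S b t', t')) ` ({..d} - {t})"
  proof (intro equalityI subsetI)
    fix w assume "w \<in> {w. Rel k d s m S P (0,j,t) w}"
    then obtain j' t' where w: "w = (0,j',t')" "j'<k" "t'\<le>d" "(j,t) \<noteq> (j',t')" "beta S j t = beta S j' t'"
      unfolding Rel_def by auto
    then have j': "j' = gam S b t'" using beta_iff[OF HS w(2) w(3) b(1)] unfolding b_def by simp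
    then have "t' \<noteq> t" using w(4) b(2) by auto
    then show "w \<in> (\<lambda>t'. (0::nat, gam S b t', t')) ` ({..d} - {t})" using w j' by auto
  next
    fix w assume "w \<in> (\<lambda>t'. (0::nat, gam S b t', t')) ` ({..d} - {t})"
    then obtain t' where t': "t' \<le> d" "t' \<noteq> t" "w = (0, gam S b t', t')" by auto
    have "gam S b t' < k" "beta S (gam S b t') t' = b" using gb[OF HS b(1) t'(1)] by auto
    then show "w \<in> {w. Rel k d s m S P (0,j,t) w}"
      unfolding Rel_def using t' j t b_def by auto
  qed
  have "inj_on (\<lambda>t'. (0::nat, gam S b t', t')) ({..d} - {t})" by (rule inj_onI) auto
  then have "card {w. Rel k d s m S P (0,j,t) w} = card ({..d} - {t})" unfolding eq by (rule card_image)
  also have "\<dots> = d" using t by simp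
  finally show ?thesis .
qed

lemma deg_A:
  assumes HP: "\<forall>i<d. \<forall>i'<d. P (i,i') permutes {..<s}" and i: "i < d" and x: "x < s"
  shows "card {w. Rel k d s m S P (1,i,x) w} = d"
proof -
  have eq: "{w. Rel k d s m S P (1,i,x) w} = (\<lambda>i'. (2::nat, i', P (i,i') x)) ` {..<d}"
  proof (intro equalityI subsetI)
    fix w assume "w \<in> {w. Rel k d s m S P (1,i,x) w}"
    then show "w \<in> (\<lambda>i'. (2::nat, i', P (i,i') x)) ` {..<d}" unfolding Rel_def by auto
  next
    fix w assume "w \<in> (\<lambda>i'. (2::nat, i', P (i,i') x)) ` {..<d}"
    then obtain i' where i': "i' < d" "w = (2, i', P (i,i') x)" by auto
    have "P (i,i') x < s" using permutes_in_image[of "P (i,i')" "{..<s}" x] HP i i' x by auto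
    then show "w \<in> {w. Rel k d s m S P (1,i,x) w}" unfolding Rel_def using i i' x by auto
  qed
  have "inj_on (\<lambda>i'. (2::nat, i', P (i,i') x)) {..<d}" by (rule inj_onI) auto
  then show ?thesis unfolding eq by (simp add: card_image)
qed

lemma deg_B:
  assumes HP: "\<forall>i<d. \<forall>i'<d. P (i,i') permutes {..<s}" and i': "i' < d" and y: "y < s"
  shows "card {w. Rel k d s m S P (2,i',y) w} = d"
proof -
  have eq: "{w. Rel k d s m S P (2,i',y) w} = (\<lambda>i. (1::nat, i, inv (P (i,i')) y)) ` {..<d}"
  proof (intro equalityI subsetI)
    fix w assume "w \<in> {w. Rel k d s m S P (2,i',y) w}"
    then obtain i x where w: "i < d" "x < s" "y = P (i,i') x" "w = (1,i,x)" unfolding Rel_def by auto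
    then have "x = inv (P (i,i')) y" using permutes_inverses[of "P (i,i')" "{..<s}"] HP i' by auto
    then show "w \<in> (\<lambda>i. (1::nat, i, inv (P (i,i')) y)) ` {..<d}" using w by auto
  next
    fix w assume "w \<in> (\<lambda>i. (1::nat, i, inv (P (i,i')) y)) ` {..<d}"
    then obtain i where i: "i < d" "w = (1, i, inv (P (i,i')) y)" by auto
    have p: "P (i,i') permutes {..<s}" using HP i i' by auto
    have "inv (P (i,i')) y < s" using permutes_in_image[OF permutes_inv[OF p], of y] y by auto
    moreover have "P (i,i') (inv (P (i,i')) y) = y" using permutes_inverses[OF p] by auto
    ultimately show "w \<in> {w. Rel k d s m S P (2,i',y) w}" unfolding Rel_def using i i' y
      by auto
  qed
  have "inj_on (\<lambda>i. (1::nat, i, inv (P (i,i')) y)) {..<d}" by (rule inj_onI) auto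
  then show ?thesis unfolding eq by (simp add: card_image)
qed

lemma modsub: "x < m \<Longrightarrow> y < m \<Longrightarrow> (y + m - x) mod (m::nat) = (if x \<le> y then y - x else y + m - x)"
proof (cases "x \<le> y")
  case True
  assume "x < m" "y < m"
  then have "y + m - x = (y - x) + m" using True by simp
  then have "(y + m - x) mod m = (y - x) mod m" by simp
  also have "\<dots> = y - x" using \<open>y < m\<close> by simp
  finally show ?thesis using True by simp
next
  case False
  assume "x < m" "y < m"
  then show ?thesis using False by simp
qed

lemma card_bij_filter:
  assumes "finite A" "inj_on g A" "g ` A = A"
  shows "card {y\<in>A. Q (g y)} = card {z\<in>A. Q z}"
proof -
  have "g ` {y\<in>A. Q (g y)} = {z\<in>A. Q z}" using assms(3) by auto
  moreover have "inj_on g {y\<in>A. Q (g y)}" using assms(2) by (rule inj_on_subset) auto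
  ultimately show ?thesis by (metis card_image)
qed

lemma card_lt_min: "d \<le> m \<Longrightarrow> card {z\<in>{..<m}. z < (d::nat)} = d"
proof -
  assume "d \<le> m"
  then have "{z\<in>{..<m}. z < d} = {..<d}" by auto
  then show ?thesis by simp
qed

lemma deg_F:
  assumes x: "x < m" and dm: "d \<le> m"
  shows "card {w. Rel k d s m S P (3,x,0) w} = d"
proof -
  define g where "g = (\<lambda>y. (y + m - x) mod m)"
  have inj: "inj_on g {..<m}"
  proof (rule inj_onI)
    fix a b assume a: "a \<in> {..<m}" and b: "b \<in> {..<m}" and "g a = g b"
    then have "(if x \<le> a then a - x else a + m - x) = (if x \<le> b then b - x else b + m - x)"
      using modsub[OF x, of a] modsub[OF x, of b] unfolding g_def by simp
    then show "a = b" using a b x by (auto split: if_splits)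
  qed
  have im: "g ` {..<m} = {..<m}"
    by (rule endo_inj_surj) (use inj x in \<open>auto simp: g_def\<close>)
  have eq: "{w. Rel k d s m S P (3,x,0) w} = (\<lambda>y. (4::nat, y, 0::nat)) ` {y\<in>{..<m}. g y < d}"
    unfolding Rel_def g_def using x by auto
  have "inj_on (\<lambda>y. (4::nat, y, 0::nat)) {y\<in>{..<m}. g y < d}" by (rule inj_onI) auto
  then have "card {w. Rel k d s m S P (3,x,0) w} = card {y\<in>{..<m}. g y < d}" unfolding eq by (rule card_image)
  also have "\<dots> = card {z\<in>{..<m}. z < d}" by (rule card_bij_filter[OF _ inj im]) simp
  also have "\<dots> = d" using dm by (rule card_lt_min)
  finally show ?thesis .
qed

lemma deg_G:
  assumes y: "y < m" and dm: "d \<le> m"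
  shows "card {w. Rel k d s m S P (4,y,0) w} = d"
proof -
  define g where "g = (\<lambda>x. (y + m - x) mod m)"
  have inj: "inj_on g {..<m}"
    by (rule inj_onI) (auto simp: g_def modsub y split: if_splits)
  have im: "g ` {..<m} = {..<m}"
    by (rule endo_inj_surj) (use inj y in \<open>auto simp: g_def\<close>)
  have eq: "{w. Rel k d s m S P (4,y,0) w} = (\<lambda>x. (3::nat, x, 0::nat)) ` {x\<in>{..<m}. g x < d}"
    unfolding Rel_def g_def using y by auto
  have "inj_on (\<lambda>x. (3::nat, x, 0::nat)) {x\<in>{..<m}. g x < d}" by (rule inj_onI) auto
  then have "card {w. Rel k d s m S P (4,y,0) w} = card {x\<in>{..<m}. g x < d}" unfolding eq by (rule card_image)
  also have "\<dots> = card {z\<in>{..<m}. z < d}" by (rule card_bij_filter[OF _ inj im]) simp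
  also have "\<dots> = d" using dm by (rule card_lt_min)
  finally show ?thesis .
qed

lemma Gr_reg:
  assumes HS: "\<forall>t\<in>{1..d}. S t permutes {..<k}" and HP: "\<forall>i<d. \<forall>i'<d. P (i,i') permutes {..<s}"
    and dm: "d \<le> m"
  shows "reg_on (Vset k d s m) d (Gr k d s m S P)"
  unfolding Gr_def
proof (rule reg_from_rel)
  show "\<And>u v. Rel k d s m S P u v \<Longrightarrow> Rel k d s m S P v u" by (rule Rel_sym)
  show "\<And>u. \<not> Rel k d s m S P u u" by (rule Rel_irr)
  show "\<And>u v. Rel k d s m S P u v \<Longrightarrow> u \<in> Vset k d s m" by (rule Rel_V)
  fix v assume "v \<in> Vset k d s m"
  then show "card {w. Rel k d s m S P v w} = d"
    unfolding Vset_def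
    using deg_clique[OF HS] deg_A[OF HP] deg_B[OF HP] deg_F[OF _ dm] deg_G[OF _ dm] by auto
qed


definition triA :: "'a set set \<Rightarrow> 'a set set" where
  "triA G = {T. card T = 3 \<and> (\<forall>e. e \<subseteq> T \<and> card e = 2 \<longrightarrow> e \<in> G)}"

definition Cb :: "nat \<Rightarrow> (nat \<Rightarrow> nat \<Rightarrow> nat) \<Rightarrow> nat \<Rightarrow> (nat \<times> nat \<times> nat) set" where
  "Cb d S b = (\<lambda>t. (0::nat, gam S b t, t)) ` {..d}"

lemma Cb_rel:
  assumes HS: "\<forall>t\<in>{1..d}. S t permutes {..<k}" and b: "b < k"
    and u: "u \<in> Cb d S b" and v: "v \<in> Cb d S b" and uv: "u \<noteq> v"
  shows "Rel k d s m S P u v"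
proof -
  obtain t where t: "t \<le> d" "u = (0, gam S b t, t)" using u unfolding Cb_def by auto
  obtain t' where t': "t' \<le> d" "v = (0, gam S b t', t')" using v unfolding Cb_def by auto
  have "gam S b t < k" "beta S (gam S b t) t = b" using gb[OF HS b t(1)] by auto
  moreover have "gam S b t' < k" "beta S (gam S b t') t' = b" using gb[OF HS b t'(1)] by auto
  ultimately show ?thesis unfolding Rel_def using t t' uv by auto
qed

lemma card_Cb: "card (Cb d S b) = d + 1"
proof -
  have "inj_on (\<lambda>t. (0::nat, gam S b t, t)) {..d}" by (rule inj_onI) auto
  then show ?thesis unfolding Cb_def by (simp add: card_image)
qed

lemma Cb_disj:
  assumes HS: "\<forall>t\<in>{1..d}. S t permutes {..<k}" and "b < k" "b' < k" "b \<noteq> b'"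
  shows "Cb d S b \<inter> Cb d S b' = {}"
proof -
  { fix t t' assume t: "t \<le> d" "t' \<le> d" and eq: "(0::nat, gam S b t, t) = (0, gam S b' t', t')"
    then have "t = t'" "gam S b t = gam S b' t" by auto
    then have "b = b'" using gb[OF HS \<open>b < k\<close> t(1)] gb[OF HS \<open>b' < k\<close> t(1)] by metis
    then have False using assms by simp }
  then show ?thesis unfolding Cb_def by blast
qed

lemma Cb_sub:
  assumes b: "b < k" and HS: "\<forall>t\<in>{1..d}. S t permutes {..<k}"
  shows "Cb d S b \<subseteq> Vset k d s m"
proof
  fix x assume "x \<in> Cb d S b"
  then obtain t where t: "t \<le> d" "x = (0, gam S b t, t)" unfolding Cb_def by auto
  have "gam S b t < k" using gb[OF HS b t(1)] by simp
  then have "x \<in> {0}\<times>{..<k}\<times>{..d}" using t by auto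
  then show "x \<in> Vset k d s m" unfolding Vset_def by blast
qed

lemma tri_count:
  assumes HS: "\<forall>t\<in>{1..d}. S t permutes {..<k}"
  shows "k * ((d+1) choose 3) \<le> card (triA (Gr k d s m S P) \<inter> Pow (Vset k d s m))"
proof -
  let ?U = "\<Union>b\<in>{..<k}. {T. T \<subseteq> Cb d S b \<and> card T = 3}"
  have fC: "finite (Cb d S b)" for b unfolding Cb_def by simp
  have "card ?U = (\<Sum>b\<in>{..<k}. card {T. T \<subseteq> Cb d S b \<and> card T = 3})"
  proof (rule card_UN_disjoint)
    show "\<forall>i\<in>{..<k}. finite {T. T \<subseteq> Cb d S i \<and> card T = 3}" using fC by auto
    show "\<forall>i\<in>{..<k}. \<forall>j\<in>{..<k}. i \<noteq> j \<longrightarrow> {T. T \<subseteq> Cb d S i \<and> card T = 3} \<inter> {T. T \<subseteq> Cb d S j \<and> card T = 3} = {}"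
    proof (intro ballI impI)
      fix i j assume ij: "i \<in> {..<k}" "j \<in> {..<k}" "i \<noteq> j"
      have dj: "Cb d S i \<inter> Cb d S j = {}" using Cb_disj[OF HS] ij by auto
      show "{T. T \<subseteq> Cb d S i \<and> card T = 3} \<inter> {T. T \<subseteq> Cb d S j \<and> card T = 3} = {}"
      proof (rule ccontr)
        assume "{T. T \<subseteq> Cb d S i \<and> card T = 3} \<inter> {T. T \<subseteq> Cb d S j \<and> card T = 3} \<noteq> {}"
        then obtain T where T: "T \<subseteq> Cb d S i" "T \<subseteq> Cb d S j" "card T = 3" by auto
        then have "T = {}" using dj by auto
        then show False using T by simp
      qed
    qed
  qed simp
  also have "\<dots> = (\<Sum>b\<in>{..<k}. (d+1) choose 3)"
    by (rule sum.cong[OF refl]) (simp add: n_subsets fC card_Cb)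
  finally have cU: "card ?U = k * ((d+1) choose 3)" by simp
  have "?U \<subseteq> triA (Gr k d s m S P) \<inter> Pow (Vset k d s m)"
  proof
    fix T assume "T \<in> ?U"
    then obtain b where b: "b < k" "T \<subseteq> Cb d S b" "card T = 3" by auto
    have "\<forall>e. e \<subseteq> T \<and> card e = 2 \<longrightarrow> e \<in> Gr k d s m S P"
    proof (intro allI impI)
      fix e assume e: "e \<subseteq> T \<and> card e = 2"
      then obtain u v where uv: "e = {u,v}" "u \<noteq> v" by (auto simp: card_2_iff)
      have "u \<in> Cb d S b" "v \<in> Cb d S b" using uv e b(2) by auto
      then have "Rel k d s m S P u v" using Cb_rel[OF HS b(1) _ _ uv(2)] by blast
      then show "e \<in> Gr k d s m S P" unfolding Gr_def uv(1) by blast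
    qed
    have "Cb d S b \<subseteq> Vset k d s m" by (rule Cb_sub[OF b(1) HS])
    then have "T \<subseteq> Vset k d s m" using b(2) by (rule order_trans[rotated])
    moreover note \<open>\<forall>e. e \<subseteq> T \<and> card e = 2 \<longrightarrow> e \<in> Gr k d s m S P\<close>
    ultimately show "T \<in> triA (Gr k d s m S P) \<inter> Pow (Vset k d s m)" unfolding triA_def using b(3) by blast
  qed
  moreover have "finite (triA (Gr k d s m S P) \<inter> Pow (Vset k d s m))"
  proof -
    have "finite (Vset k d s m)" unfolding Vset_def by simp
    then show ?thesis by simp
  qed
  ultimately show ?thesis using cU card_mono by (metis (no_types, lifting))
qed

lemma tri_transfer:
  assumes f: "inj_on f V" and T: "T \<in> triA G \<inter> Pow V" and G: "G \<subseteq> Pow V"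
  shows "f ` T \<in> triA (img f G)"
proof -
  have TV: "T \<subseteq> V" and cT: "card T = 3" and all: "\<And>e. e \<subseteq> T \<Longrightarrow> card e = 2 \<Longrightarrow> e \<in> G"
    using T unfolding triA_def by auto
  have injT: "inj_on f T" using f TV by (rule inj_on_subset)
  have "card (f ` T) = 3" using card_image[OF injT] cT by simp
  moreover have "e \<in> img f G" if e: "e \<subseteq> f ` T" "card e = 2" for e
  proof -
    obtain e0 where e0: "e0 \<subseteq> T" "e = f ` e0" using e(1) by (auto simp: subset_image_iff)
    have "card e0 = 2" using e0 e(2) card_image[OF inj_on_subset[OF injT e0(1)]] by simp
    then have "e0 \<in> G" using all e0 by auto
    then show ?thesis using e0 unfolding img_def by auto
  qed
  ultimately show ?thesis unfolding triA_def by auto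
qed

lemma triA_nat: "triA (G::nat set set) = triangles G"
  unfolding triA_def triangles_def by simp


lemma Gr_edge: "{u,v} \<in> Gr k d s m S P \<longleftrightarrow> Rel k d s m S P u v"
  unfolding Gr_def by (rule edge_rel) (rule Rel_sym)

lemma Gr_sub: "Gr k d s m S P \<subseteq> Pow (Vset k d s m)"
  unfolding Gr_def using Rel_V Rel_sym by blast

lemma Gr_inj:
  assumes S1: "S1 \<in> PiE {1..d} (\<lambda>_. {p. p permutes {..<k}})" and S2: "S2 \<in> PiE {1..d} (\<lambda>_. {p. p permutes {..<k}})"
    and P1: "P1 \<in> PiE ({..<d}\<times>{..<d}) (\<lambda>_. {p. p permutes {..<s}})" and P2: "P2 \<in> PiE ({..<d}\<times>{..<d}) (\<lambda>_. {p. p permutes {..<s}})"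
    and eq: "Gr k d s m S1 P1 = Gr k d s m S2 P2"
  shows "S1 = S2 \<and> P1 = P2"
proof -
  have R: "Rel k d s m S1 P1 u v \<longleftrightarrow> Rel k d s m S2 P2 u v" for u v
    using Gr_edge[of u v k d s m S1 P1] Gr_edge[of u v k d s m S2 P2] eq by simp
  have "S1 t = S2 t" if t: "t \<in> {1..d}" for t
  proof
    fix j
    have p1: "S1 t permutes {..<k}" and p2: "S2 t permutes {..<k}" using S1 S2 t by auto
    show "S1 t j = S2 t j"
    proof (cases "j < k")
      case False then show ?thesis using permutes_not_in[OF p1] permutes_not_in[OF p2] by simp
    next
      case True
      have jj: "S1 t j < k" using permutes_in_image[OF p1] True by simp
      have "beta S1 (S1 t j) t = j" using t permutes_inverses[OF p1] unfolding beta_def by auto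
      then have "Rel k d s m S1 P1 (0,j,0) (0, S1 t j, t)"
        unfolding Rel_def using True jj t by (auto simp: beta_def)
      then have "Rel k d s m S2 P2 (0,j,0) (0, S1 t j, t)" using R by simp
      then have "j = beta S2 (S1 t j) t" unfolding Rel_def by (auto simp: beta_def)
      then have "j = inv (S2 t) (S1 t j)" using t unfolding beta_def by auto
      then show ?thesis using permutes_inverses[OF p2] by metis
    qed
  qed
  then have "S1 = S2" using S1 S2 by (intro PiE_ext) auto
  moreover have "P1 ii = P2 ii" if ii: "ii \<in> {..<d}\<times>{..<d}" for ii
  proof
    fix x
    obtain i i' where ii': "ii = (i,i')" "i < d" "i' < d" using ii by auto
    have p1: "P1 ii permutes {..<s}" and p2: "P2 ii permutes {..<s}" using P1 P2 ii by auto
    show "P1 ii x = P2 ii x"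
    proof (cases "x < s")
      case False then show ?thesis using permutes_not_in[OF p1] permutes_not_in[OF p2] by simp
    next
      case True
      have y: "P1 ii x < s" using permutes_in_image[OF p1] True by simp
      have "Rel k d s m S1 P1 (1,i,x) (2,i',P1 ii x)"
        unfolding Rel_def using True y ii' by auto
      then have "Rel k d s m S2 P2 (1,i,x) (2,i',P1 ii x)" using R by simp
      then show ?thesis unfolding Rel_def using ii' by auto
    qed
  qed
  then have "P1 = P2" using P1 P2 by (intro PiE_ext) auto
  ultimately show ?thesis by simp
qed

theorem lower_main:
  fixes c :: real
  assumes dm: "d \<le> m" and nV: "n = k*(d+1) + 2*d*s + 2*m"
    and tri: "c * T_max n d \<le> k * ((d+1) choose 3)"
  shows "fact k ^ d * fact s ^ (d*d) \<le> card (G_dc d c n)"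
proof -
  define V where "V = Vset k d s m"
  have cV: "card V = n" unfolding V_def nV card_Vset by simp
  have fV: "finite V" unfolding V_def Vset_def by simp
  obtain f where f: "bij_betw f V {1..n}" using finite_same_card_bij[OF fV, of "{1..n}"] cV by auto
  have injf: "inj_on f V" and imf: "f ` V = {1..n}" using f by (auto simp: bij_betw_def)
  define I where "I = PiE {1..d} (\<lambda>_. {p. p permutes {..<k}}) \<times> PiE ({..<d}\<times>{..<d}) (\<lambda>_. {p. p permutes {..<s}})"
  define \<Phi> where "\<Phi> = (\<lambda>(S,P). img f (Gr k d s m S P))"
  have inG: "\<Phi> q \<in> G_dc d c n" if q: "q \<in> I" for q
  proof -
    obtain S P where SP: "q = (S,P)" by (cases q)
    have HS: "\<forall>t\<in>{1..d}. S t permutes {..<k}" using q unfolding SP I_def by auto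
    have HP: "\<forall>i<d. \<forall>i'<d. P (i,i') permutes {..<s}" using q unfolding SP I_def by auto
    let ?G = "Gr k d s m S P"
    have reg: "reg_on V d ?G" unfolding V_def by (rule Gr_reg[OF HS HP dm])
    have R: "img f ?G \<in> regular_graphs n d"
      using reg_on_img[OF reg injf] imf by (simp add: regular_graphs_reg_on)
    have GV: "?G \<subseteq> Pow V" unfolding V_def by (rule Gr_sub)
    have sub: "image f ` (triA ?G \<inter> Pow V) \<subseteq> triangles (img f ?G)"
      using tri_transfer[OF injf _ GV] by (auto simp: triA_nat[symmetric])
    have ftri: "finite (triangles (img f ?G))"
      using tri_finite[OF R] by (rule finite_subset) simp
    have "k * ((d+1) choose 3) \<le> card (triA ?G \<inter> Pow V)" unfolding V_def by (rule tri_count[OF HS])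
    also have "\<dots> = card (image f ` (triA ?G \<inter> Pow V))"
      by (rule card_image[symmetric], rule inj_on_subset[OF inj_on_image_Pow[OF injf]]) auto
    also have "\<dots> \<le> card (triangles (img f ?G))" by (rule card_mono[OF ftri sub])
    finally have "c * T_max n d \<le> card (triangles (img f ?G))" using tri
      by (meson of_nat_le_iff order_trans)
    then show ?thesis using R unfolding G_dc_def \<Phi>_def SP by simp
  qed
  have inj: "inj_on \<Phi> I"
  proof (rule inj_onI)
    fix q1 q2 assume q1: "q1 \<in> I" and q2: "q2 \<in> I" and eq: "\<Phi> q1 = \<Phi> q2"
    obtain S1 P1 where s1: "q1 = (S1,P1)" by (cases q1)
    obtain S2 P2 where s2: "q2 = (S2,P2)" by (cases q2)
    have "Gr k d s m S1 P1 = Gr k d s m S2 P2"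
    proof -
      have i2: "inj_on (image (image f)) (Pow (Pow V))"
        by (rule inj_on_image_Pow[OF inj_on_image_Pow[OF injf]])
      have "img f (Gr k d s m S1 P1) = img f (Gr k d s m S2 P2)" using eq unfolding \<Phi>_def s1 s2 by simp
      then have e2: "image (image f) (Gr k d s m S1 P1) = image (image f) (Gr k d s m S2 P2)" unfolding img_def .
      have m1: "Gr k d s m S1 P1 \<in> Pow (Pow V)" and m2: "Gr k d s m S2 P2 \<in> Pow (Pow V)"
        using Gr_sub unfolding V_def by blast+
      show ?thesis by (rule inj_onD[OF i2 e2 m1 m2])
    qed
    then show "q1 = q2" using Gr_inj q1 q2 unfolding s1 s2 I_def by blast
  qed
  have cI: "card I = fact k ^ d * fact s ^ (d*d)"
    unfolding I_def by (simp add: card_cartesian_product card_PiE card_permutations)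
  have "fact k ^ d * fact s ^ (d*d) = card (\<Phi> ` I)" using card_image[OF inj] cI by simp
  also have "\<dots> \<le> card (G_dc d c n)"
  proof (rule card_mono)
    show "finite (G_dc d c n)" by (rule finite_subset[OF _ finite_reg]) (auto simp: G_dc_def)
  qed (use inG in auto)
  finally show ?thesis by simp
qed


lemma pow_fact_le_exp: "real k ^ k / fact k \<le> exp (real k)"
proof -
  have s: "(\<lambda>n. real k ^ n /\<^sub>R fact n) sums exp (real k)" by (rule exp_converges)
  have "(\<Sum>n\<in>{k}. real k ^ n /\<^sub>R fact n) \<le> (\<Sum>n. real k ^ n /\<^sub>R fact n)"
    by (rule sum_le_suminf[OF sums_summable[OF s]]) auto
  then show ?thesis using sums_unique[OF s] by (simp add: divide_inverse mult.commute)
qed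

lemma ln_fact_ge: "real k * ln (real k) - real k \<le> ln (fact k)"
proof (cases "k = 0")
  case True then show ?thesis by simp
next
  case False
  then have k: "real k > 0" by simp
  have "real k ^ k \<le> exp (real k) * fact k" using pow_fact_le_exp[of k]
    by (simp add: divide_le_eq)
  then have "ln (real k ^ k) \<le> ln (exp (real k) * fact k)"
    using k by (subst ln_le_cancel_iff) auto
  then show ?thesis using k by (simp add: ln_realpow ln_mult)
qed

lemma choose2_real: "real (d choose 2) = real d * (real d - 1) / 2"
proof (cases "d = 0")
  case True then show ?thesis by simp
next
  case False
  have "even (d * (d - 1))" by (cases "even d") auto
  then have "real (d * (d - 1) div 2) = real (d * (d - 1)) / 2" by (simp add: real_of_nat_div)
  also have "\<dots> = real d * (real d - 1) / 2" using False by (simp add: of_nat_diff)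
  finally show ?thesis by (simp add: choose_two)
qed

lemma choose3: "((d+1) choose 3) * 3 = (d+1) * (d choose 2)"
  using Suc_times_binomial_eq[of d 2] by (simp add: numeral_3_eq_3)

lemma params:
  fixes c :: real and n d :: nat
  assumes d1: "d \<ge> 1" and c: "0 < c" "c < 1" and ev: "even (d*n)" and big: "(1-c)*n \<ge> 6*d + 2"
  shows "\<exists>k s m. d \<le> m \<and> n = k*(d+1) + 2*d*s + 2*m \<and> c*n \<le> real (k*(d+1))
     \<and> real (k*(d+1)) \<le> c*n + 2*(d+1) \<and> m < 2*d"
proof -
  define k0 where "k0 = nat \<lceil>c*n/(d+1)\<rceil>"
  have k0a: "c*n/(d+1) \<le> k0" unfolding k0_def by linarith
  have k0b: "real k0 \<le> c*n/(d+1) + 1"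
  proof -
    have "c*n/(d+1) \<ge> 0" using c by simp
    then have "real k0 = real_of_int \<lceil>c*n/(d+1)\<rceil>" unfolding k0_def by simp
    then show ?thesis by linarith
  qed
  define k where "k = (if even (n - k0*(d+1)) then k0 else k0+1)"
  have dpos: "real d + 1 > 0" by simp
  have ka: "c*n \<le> real (k*(d+1))"
  proof -
    have "c*n \<le> k0*(d+1)" using k0a dpos by (simp add: divide_le_eq algebra_simps)
    also have "\<dots> \<le> real (k*(d+1))"
    proof -
      have "k0 \<le> k" unfolding k_def by simp
      then have "k0*(d+1) \<le> k*(d+1)" by (rule mult_right_mono) simp
      then show ?thesis by (metis of_nat_le_iff of_nat_mult of_nat_Suc add.commute Suc_eq_plus1)
    qed
    finally show ?thesis .
  qed
  have kb: "real (k*(d+1)) \<le> c*n + 2*(d+1)"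
  proof -
    have "real k \<le> c*n/(d+1) + 2" using k0b unfolding k_def by auto
    then have f1: "real k * (real d+1) \<le> (c*n/(real d+1) + 2) * (real d+1)" using dpos by (intro mult_right_mono) (auto simp: add.commute)
    have e: "(c*n/(real d+1) + 2) * (real d+1) = c*n + 2*(real d+1)" using dpos by (simp add: distrib_right)
    have f2: "real k * (real d+1) \<le> c*n + 2*(real d+1)" using f1 e by linarith
    then show ?thesis by (simp add: algebra_simps)
  qed
  have r: "real k + real d * real k + 4 * real d \<le> real n" using kb big by (simp add: algebra_simps)
  have "real (k*(d+1) + 4*d) \<le> real n" using r by (simp add: algebra_simps)
  then have kn: "k*(d+1) + 4*d \<le> n" by (simp only: of_nat_le_iff)
  have ev1: "even (n - k*(d+1))"
  proof (cases "even (n - k0*(d+1))")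
    case True then show ?thesis unfolding k_def by simp
  next
    case False
    have kk: "k = k0 + 1" using False unfolding k_def by simp
    have le: "(k0+1)*(d+1) \<le> n" using kn unfolding kk by simp
    define r0 where "r0 = n - k0*(d+1)"
    have nr: "n = k0*(d+1) + r0" using le unfolding r0_def by simp
    have r0d: "d + 1 \<le> r0" using le nr by (simp add: algebra_simps)
    have or0: "odd r0" using False unfolding r0_def .
    have ed: "even d"
    proof (rule ccontr)
      assume "odd d"
      then have "even n" using ev by auto
      moreover have "even (k0*(d+1))" using \<open>odd d\<close> by simp
      ultimately have "even r0" using nr by (metis even_add)
      then show False using or0 by simp
    qed
    have "n - k*(d+1) = r0 - (d+1)" unfolding kk using nr by (simp add: algebra_simps)
    moreover have "even (r0 - (d+1))" using or0 ed r0d by presburger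
    ultimately show ?thesis by simp
  qed
  define h where "h = (n - k*(d+1)) div 2"
  have h2: "n - k*(d+1) = 2*h" using ev1 unfolding h_def by simp
  have hd: "h \<ge> 2*d" using kn h2 by simp
  define s where "s = (h - d) div d"
  define m where "m = h - d*s"
  have dmod: "h - d = d*s + (h-d) mod d" unfolding s_def by simp
  have mlt: "(h-d) mod d < d" using d1 by simp
  have mm: "m = d + (h-d) mod d" unfolding m_def using dmod hd by linarith
  have m1: "d \<le> m" and m2: "m < 2*d" using mm mlt by auto
  have "d*s \<le> h - d" using dmod by linarith
  have "n = k*(d+1) + 2*d*s + 2*m" unfolding m_def using h2 kn \<open>d*s \<le> h - d\<close> hd by (simp add: algebra_simps)
  then show ?thesis using m1 m2 ka kb by blast
qed


lemma ln_ge1: "3 \<le> (x::real) \<Longrightarrow> 1 \<le> ln x"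
proof -
  assume x: "3 \<le> x"
  have "exp 1 \<le> x" using exp_le x by linarith
  have "x > 0" using x by linarith
  then have "ln (exp 1) \<le> ln x" using \<open>exp 1 \<le> x\<close> by (subst ln_le_cancel_iff) auto
  then show ?thesis by simp
qed

lemma xlnx_mono:
  fixes K \<kappa> :: real
  assumes "3 \<le> \<kappa>" "\<kappa> \<le> K"
  shows "\<kappa> * (ln \<kappa> - 1) \<le> K * ln K - K"
proof -
  have l: "ln \<kappa> \<le> ln K" using assms by simp
  have l1: "ln \<kappa> - 1 \<ge> 0" using ln_ge1[OF assms(1)] by simp
  have "\<kappa> * (ln \<kappa> - 1) \<le> K * (ln \<kappa> - 1)" using l1 assms by (intro mult_right_mono) auto
  also have "\<dots> \<le> K * (ln K - 1)" using l assms by (intro mult_left_mono) auto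
  finally show ?thesis by (simp add: algebra_simps)
qed

lemma ln_fact_ge': "3 \<le> \<kappa> \<Longrightarrow> \<kappa> \<le> real k \<Longrightarrow> \<kappa> * (ln \<kappa> - 1) \<le> ln (fact k)"
  using xlnx_mono[of \<kappa> "real k"] ln_fact_ge[of k] by linarith

lemma dL_le: "real d \<ge> 1 \<Longrightarrow> real n \<ge> 1 \<Longrightarrow> real d * ln (real n / (real d + 1)) \<le> real n"
proof -
  assume d: "real d \<ge> 1" and n: "real n \<ge> 1"
  have "ln (real n / (real d + 1)) \<le> real n / (real d + 1) - 1" using n d by (intro ln_le_minus_one) auto
  also have "\<dots> \<le> real n / (real d + 1)" by simp
  also have "\<dots> \<le> real n / real d" using d n by (intro divide_left_mono) auto
  finally have "real d * ln (real n / (real d + 1)) \<le> real d * (real n / real d)"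
    using d by (intro mult_left_mono) auto
  then show ?thesis using d by simp
qed


lemma comb:
  fixes lnC A1 A2 X1 Y L lc a D N T :: real
  assumes "lnC \<ge> A1 + A2" "A1 \<ge> X1*(L + lc - 1)" "A2 \<ge> Y*(L - a) - 4*D*N" "X1*L + Y*L = T"
    "X1*(lc - 1) \<ge> -(1-lc)*D*N" "Y*a \<le> (a/2)*D*N"
  shows "lnC \<ge> T - (5 - lc + a/2)*D*N"
proof -
  have "X1*(L + lc - 1) = X1*L + X1*(lc - 1)" by (simp add: algebra_simps)
  moreover have "Y*(L - a) = Y*L - Y*a" by (simp add: algebra_simps)
  moreover have "(5 - lc + a/2)*D*N = 4*D*N + (1-lc)*D*N + (a/2)*D*N" by (simp add: algebra_simps)
  ultimately show ?thesis using assms by linarith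
qed

lemma lower_log:
  fixes c :: real and n d :: nat
  assumes d1: "d \<ge> 1" and c: "0 < c" "c < 1" and ev: "even (d*n)"
    and big: "real n \<ge> 30/(c*(1-c)) * d"
  shows "card (G_dc d c n) \<ge> 1 \<and>
     ln (card (G_dc d c n)) \<ge> (real d * real n / 2) * ln (real n / (real d + 1)) * (1 - c * (real d - 1) / (real d + 1))
        - (5 - ln c + (1 + ln (4/(1-c)))/2) * real d * real n"
proof -
  define D where "D = real d"
  define N where "N = real n"
  define L where "L = ln (N / (D + 1))"
  define a where "a = 1 + ln (4/(1-c))"
  have D1: "D \<ge> 1" unfolding D_def using d1 by simp
  have cc: "c*(1-c) > 0" using c by simp
  have h1: "(1-c)*N \<ge> 30*D/c"
  proof -
    have "30/(c*(1-c)) * D \<le> N" using big unfolding N_def D_def .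
    then have "(1-c) * (30/(c*(1-c)) * D) \<le> (1-c)*N" using c by (intro mult_left_mono) auto
    moreover have "(1-c) * (30/(c*(1-c)) * D) = 30*D/c" using c by (simp add: field_simps)
    ultimately show ?thesis by simp
  qed
  have h2: "c*N \<ge> 30*D/(1-c)"
  proof -
    have "30/(c*(1-c)) * D \<le> N" using big unfolding N_def D_def .
    then have "c * (30/(c*(1-c)) * D) \<le> c*N" using c by (intro mult_left_mono) auto
    moreover have "c * (30/(c*(1-c)) * D) = 30*D/(1-c)" using c by (simp add: field_simps)
    ultimately show ?thesis by simp
  qed
  have "30*D/c \<ge> 30*D" using c D1 by (simp add: field_simps)
  then have h3: "(1-c)*N \<ge> 30*D" using h1 by linarith
  have "30*D/(1-c) \<ge> 30*D" using c D1 by (simp add: field_simps)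
  then have h4: "c*N \<ge> 30*D" using h2 by linarith
  have N0: "N > 0"
  proof (rule ccontr)
    assume "\<not> N > 0"
    then have "N = 0" unfolding N_def by simp
    then show False using h4 D1 by simp
  qed
  have n1: "real n \<ge> 1" using N0 unfolding N_def by (simp add: Suc_le_eq)
  have "(1-c)*real n \<ge> 6*real d + 2" using h3 D1 unfolding N_def D_def by linarith
  then have pre: "(1-c)*real n \<ge> real (6*d + 2)" by simp
  obtain k s m where km: "d \<le> m" "n = k*(d+1) + 2*d*s + 2*m" "c*n \<le> real (k*(d+1))"
     "real (k*(d+1)) \<le> c*n + real (2*(d+1))" "m < 2*d"
    using params[OF d1 c ev pre] by blast
  have tri: "c * T_max n d \<le> real (k * ((d+1) choose 3))"
  proof -
    have C3: "real ((d+1) choose 3) * 3 = (real d + 1) * real (d choose 2)"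
      using choose3[of d] by (metis of_nat_mult of_nat_numeral of_nat_Suc add.commute Suc_eq_plus1)
    have "c * T_max n d = (c * n) * real (d choose 2) / 3" unfolding T_max_def by simp
    also have "\<dots> \<le> real (k*(d+1)) * real (d choose 2) / 3"
      using km(3) by (intro divide_right_mono mult_right_mono) auto
    also have "\<dots> = real k * (real ((d+1) choose 3) * 3) / 3" unfolding C3 by (simp add: algebra_simps)
    also have "\<dots> = real (k * ((d+1) choose 3))" by simp
    finally show ?thesis .
  qed
  have LM: "fact k ^ d * fact s ^ (d*d) \<le> card (G_dc d c n)"
    by (rule lower_main[OF km(1) km(2)]) (use tri in simp)
  have fk: "(fact k :: nat) \<ge> 1" "(fact s :: nat) \<ge> 1" by (simp_all add: fact_ge_1)
  have pos: "fact k ^ d * fact s ^ (d*d) \<ge> (1::nat)" using fk by (simp add: one_le_power)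
  have card1: "card (G_dc d c n) \<ge> 1" using LM pos by linarith
  have LMr: "real (fact k ^ d * fact s ^ (d*d)) \<le> real (card (G_dc d c n))" using LM by (simp only: of_nat_le_iff)
  have x0: "0 < real (fact k ^ d * fact s ^ (d*d))" using pos by linarith
  have y0: "0 < real (card (G_dc d c n))" using x0 LMr by linarith
  have "ln (real (fact k ^ d * fact s ^ (d*d))) \<le> ln (real (card (G_dc d c n)))"
    using ln_le_cancel_iff[OF x0 y0] LMr by blast
  moreover have "ln (real (fact k ^ d * fact s ^ (d*d))) = D * ln (fact k) + D*D * ln (fact s)"
    unfolding D_def by (simp add: ln_mult ln_realpow)
  ultimately have lc: "ln (real (card (G_dc d c n))) \<ge> D * ln (fact k) + D*D * ln (fact s)" by simp
  define \<kappa> where "\<kappa> = c*N/(D+1)"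
  have k3: "\<kappa> \<ge> 3"
  proof -
    have "3*(D+1) = 3*D + 3" by simp
    then have "3*(D+1) \<le> c*N" using h4 D1 by linarith
    then show ?thesis unfolding \<kappa>_def using D1 by (simp add: field_simps)
  qed
  have kk: "\<kappa> \<le> real k"
  proof -
    have "c*N \<le> real k * (D+1)" using km(3) unfolding N_def D_def by (simp add: algebra_simps)
    then show ?thesis unfolding \<kappa>_def using D1 by (simp add: field_simps)
  qed
  have lnk: "ln \<kappa> = ln c + L" unfolding \<kappa>_def L_def using c N0 D1 by (simp add: ln_mult ln_div)
  have p1: "D * ln (fact k) \<ge> (c*N*D/(D+1)) * (L + ln c - 1)"
  proof -
    have "\<kappa> * (ln \<kappa> - 1) \<le> ln (fact k)" by (rule ln_fact_ge'[OF k3 kk])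
    then have "D * (\<kappa> * (ln \<kappa> - 1)) \<le> D * ln (fact k)" using D1 by (intro mult_left_mono) auto
    moreover have "D * (\<kappa> * (ln \<kappa> - 1)) = (D*\<kappa>) * (L + ln c - 1)"
      using lnk by (simp add: algebra_simps)
    moreover have "D*\<kappa> = c*N*D/(D+1)" unfolding \<kappa>_def by simp
    ultimately show ?thesis by simp
  qed
  define \<sigma>0 where "\<sigma>0 = ((1-c)*N - 8*D)/(2*D)"
  define \<tau> where "\<tau> = (1-c)*N/(4*D)"
  have s2: "2*D*real s \<ge> (1-c)*N - 8*D"
  proof -
    have e: "N = real (k*(d+1)) + 2*D*real s + 2*real m" unfolding N_def D_def using km(2)
      by (metis of_nat_add of_nat_mult of_nat_numeral)
    have "real m < 2*D" using km(5) unfolding D_def by simp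
    moreover have "real (k*(d+1)) \<le> c*N + 2*D + 2" using km(4) unfolding N_def D_def by simp
    moreover have "(1-c)*N = N - c*N" by (simp add: algebra_simps)
    ultimately show ?thesis using e D1 by linarith
  qed
  have ss0: "real s \<ge> \<sigma>0" unfolding \<sigma>0_def using s2 D1 by (simp add: field_simps)
  have s0t: "\<sigma>0 \<ge> \<tau>"
  proof -
    have "(1-c)*N/2 \<le> (1-c)*N - 8*D" using h3 D1 by linarith
    then have "(1-c)*N/2/(2*D) \<le> ((1-c)*N - 8*D)/(2*D)" using D1 by (intro divide_right_mono) auto
    then show ?thesis unfolding \<sigma>0_def \<tau>_def by (simp add: field_simps)
  qed
  have t3: "\<tau> \<ge> 3"
  proof -
    have "12*D \<le> (1-c)*N" using h3 D1 by linarith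
    then show ?thesis unfolding \<tau>_def using D1 by (simp add: field_simps)
  qed
  have lnt: "ln \<tau> - 1 \<ge> L - a"
  proof -
    have c1: "(1-c)/4 > 0" using c by simp
    have "ln \<tau> = ln ((1-c)/4) + ln (N/D)" unfolding \<tau>_def using c1 N0 D1
      by (simp add: ln_mult ln_div)
    moreover have "ln (N/D) \<ge> L" unfolding L_def using N0 D1
      by (subst ln_le_cancel_iff) (auto intro: divide_left_mono)
    moreover have "ln ((1-c)/4) = - ln (4/(1-c))" using c1 by (simp add: ln_div)
    ultimately show ?thesis unfolding a_def by simp
  qed
  have p2: "D*D * ln (fact s) \<ge> (D/2)*(1-c)*N*(L - a) - 4*D*N"
  proof -
    have "\<tau> * (ln \<tau> - 1) \<le> ln (fact s)" by (rule ln_fact_ge'[OF t3]) (use ss0 s0t in linarith)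
    have a0: "a \<ge> 0" unfolding a_def using c by simp
    have lt1: "ln \<tau> - 1 \<ge> 0" using ln_ge1[OF t3] by simp
    have st: "real s \<ge> \<tau>" using ss0 s0t by linarith
    have "ln \<tau> \<le> ln (real s)" using st t3 by (subst ln_le_cancel_iff) auto
    then have "real s * (ln \<tau> - 1) \<le> real s * ln (real s) - real s" by (simp add: algebra_simps mult_left_mono)
    then have "real s * (ln \<tau> - 1) \<le> ln (fact s)" using ln_fact_ge[of s] by linarith
    moreover have "\<sigma>0 * (ln \<tau> - 1) \<le> real s * (ln \<tau> - 1)" using ss0 lt1 by (intro mult_right_mono) auto
    ultimately have q1: "\<sigma>0 * (ln \<tau> - 1) \<le> ln (fact s)" by linarith
    have s0pos: "\<sigma>0 \<ge> 0" using s0t t3 by linarith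
    have q2: "\<sigma>0 * (L - a) \<le> \<sigma>0 * (ln \<tau> - 1)" using s0pos lnt by (intro mult_left_mono) auto
    have "D*D*(\<sigma>0 * (L - a)) \<le> D*D * ln (fact s)" using q1 q2 D1 by (intro mult_left_mono) auto
    moreover have "D*D*(\<sigma>0 * (L - a)) = (D/2)*(1-c)*N*(L - a) - 4*D*D*(L - a)"
      unfolding \<sigma>0_def using D1 by (simp add: field_simps)
    moreover have "4*D*D*(L - a) \<le> 4*D*N"
    proof -
      have "D * L \<le> N" unfolding D_def N_def L_def using dL_le[of d n] d1 n1 by simp
      then have "D*(D*L) \<le> D*N" using D1 by (intro mult_left_mono) auto
      moreover have "D*D*a \<ge> 0" using a0 D1 by simp
      ultimately show ?thesis by (simp add: algebra_simps)
    qed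
    ultimately show ?thesis by linarith
  qed
  have ident: "(c*N*D/(D+1)) * L + (D/2)*(1-c)*N*L = (D*N/2) * L * (1 - c*(D-1)/(D+1))"
    using D1 by (simp add: field_simps)
  have e1: "(c*N*D/(D+1)) * (ln c - 1) \<ge> -(1 - ln c) * D * N"
  proof -
    have lc0: "1 - ln c \<ge> 0" using ln_le_minus_one[OF c(1)] c by linarith
    have "c/(D+1) \<le> 1" using c D1 by (simp add: field_simps)
    then have "(c/(D+1)) * (D*N*(1 - ln c)) \<le> 1 * (D*N*(1 - ln c))"
      using lc0 D1 N0 by (intro mult_right_mono) auto
    then have i: "-(1 * (D*N*(1 - ln c))) \<le> -((c/(D+1)) * (D*N*(1 - ln c)))" by (rule le_imp_neg_le)
    have "-(1 - ln c) * D * N = -(1 * (D*N*(1 - ln c)))" by (simp add: algebra_simps)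
    also have "\<dots> \<le> -((c/(D+1)) * (D*N*(1 - ln c)))" by (rule i)
    also have "\<dots> = (c*N*D/(D+1))*(ln c - 1)" using D1 by (simp add: field_simps)
    finally show ?thesis .
  qed
  have e2: "(D/2)*(1-c)*N*a \<le> (a/2)*D*N"
  proof -
    have a0: "a \<ge> 0" unfolding a_def using c by simp
    have "(1-c) * (D*N*a/2) \<le> 1 * (D*N*a/2)" using c a0 D1 N0 by (intro mult_right_mono) auto
    then show ?thesis by (simp add: field_simps)
  qed
  have "ln (real (card (G_dc d c n))) \<ge> (D*N/2) * L * (1 - c*(D-1)/(D+1)) - (5 - ln c + a/2) * D * N"
    by (rule comb[OF lc p1 _ ident e1 e2]) (use p2 in \<open>simp add: mult.assoc\<close>)
  then show ?thesis using card1 unfolding D_def N_def L_def a_def by simp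
qed


lemma upper_log:
  fixes c :: real and n d :: nat
  assumes d1: "d \<ge> 1" and c: "0 < c" "c < 1" and ev: "even (d*n)"
    and nd: "real n \<ge> 4 * real d" and card1: "card (G_dc d c n) \<ge> 1"
  shows "ln (card (G_dc d c n)) \<le> 2 * real d * real n
     + (real d * real n / 2) * ((1 - c*(real d - 1)/(real d + 1)) * ln (real n / real d) + c*(real d - 1)/(real d + 1) * ln (real d))"
proof -
  define D where "D = real d"
  define N where "N = real n"
  define c' where "c' = c*(D - 1)/(D + 1)"
  define A where "A = max 1 (N/(D*D))"
  define y where "y = D/N"
  define \<mu> where "\<mu> = c * real (d choose 2) * real n / (real d + 1)"
  have D1: "D \<ge> 1" unfolding D_def using d1 by simp
  have N0: "N > 0" unfolding N_def using nd d1 by simp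
  have A1: "A \<ge> 1" unfolding A_def by simp
  have y0: "y > 0" unfolding y_def using D1 N0 by simp
  have c'0: "c' \<ge> 0" unfolding c'_def using c D1 by simp
  have mu: "\<mu> = c' * (D*N/2)" unfolding \<mu>_def c'_def D_def N_def choose2_real by (simp add: field_simps)
  have UM: "real (card (G_dc d c n)) * exp (\<mu> * ln A) * y ^ (d*n div 2) \<le> exp (y*n + y*(A-1)*(d*d)) ^ n"
    using upper_main[OF d1 c(1) A1 y0, of n] unfolding \<mu>_def by (simp add: add.commute)
  have C0: "real (card (G_dc d c n)) > 0" using card1 by simp
  have lhs: "ln (real (card (G_dc d c n)) * exp (\<mu> * ln A) * y ^ (d*n div 2))
      = ln (real (card (G_dc d c n))) + \<mu> * ln A + (D*N/2) * ln y"
  proof -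
    have "real (d*n div 2) = D*N/2" unfolding D_def N_def using ev by (simp add: real_of_nat_div)
    then show ?thesis using C0 y0 by (simp add: ln_mult ln_realpow)
  qed
  have rhs: "ln (exp (y*n + y*(A-1)*(d*d)) ^ n) = N * (y*N + y*(A-1)*(D*D))"
    unfolding N_def D_def by (simp add: ln_realpow)
  have "ln (real (card (G_dc d c n)) * exp (\<mu> * ln A) * y ^ (d*n div 2)) \<le> ln (exp (y*n + y*(A-1)*(d*d)) ^ n)"
    using UM C0 y0 by (subst ln_le_cancel_iff) auto
  then have main: "ln (real (card (G_dc d c n))) + \<mu> * ln A + (D*N/2) * ln y \<le> N * (y*N + y*(A-1)*(D*D))"
    unfolding lhs rhs .
  have yN: "y*N = D" unfolding y_def using N0 by simp
  have yA: "y*(A-1)*(D*D) \<le> D"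
  proof (cases "N/(D*D) \<le> 1")
    case True then have "A = 1" unfolding A_def by simp
    then show ?thesis using D1 by simp
  next
    case False then have "A = N/(D*D)" unfolding A_def by simp
    then have "y*(A-1)*(D*D) = D - D*D*D/N" unfolding y_def using D1 N0 by (simp add: field_simps)
    moreover have "D*D*D/N \<ge> 0" using D1 N0 by simp
    ultimately show ?thesis by linarith
  qed
  have r2: "N * (y*N + y*(A-1)*(D*D)) \<le> 2*D*N"
  proof -
    have "y*N + y*(A-1)*(D*D) \<le> 2*D" using yN yA by linarith
    then have "N * (y*N + y*(A-1)*(D*D)) \<le> N * (2*D)" using N0 by (intro mult_left_mono) auto
    then show ?thesis by (simp add: algebra_simps)
  qed
  have lny: "ln y = - ln (N/D)" unfolding y_def using D1 N0 by (simp add: ln_div)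
  have lnA: "ln A \<ge> ln (N/D) - ln D"
  proof -
    have "N/(D*D) \<le> A" unfolding A_def by simp
    moreover have "N/(D*D) > 0" using N0 D1 by simp
    ultimately have "ln (N/(D*D)) \<le> ln A" by (subst ln_le_cancel_iff) (auto simp: A_def)
    moreover have "ln (N/(D*D)) = ln (N/D) - ln D" using N0 D1 by (simp add: ln_div ln_mult)
    ultimately show ?thesis by simp
  qed
  have mu0: "\<mu> \<ge> 0" unfolding mu using c'0 D1 N0 by simp
  have "\<mu> * (ln (N/D) - ln D) \<le> \<mu> * ln A" using mu0 lnA by (intro mult_left_mono) auto
  then have "ln (real (card (G_dc d c n))) \<le> 2*D*N + (D*N/2) * ln (N/D) - \<mu> * (ln (N/D) - ln D)"
    using main r2 lny by simp
  also have "\<dots> = 2*D*N + (D*N/2) * ((1 - c') * ln (N/D) + c' * ln D)"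
    unfolding mu by (simp add: field_simps)
  finally show ?thesis unfolding D_def N_def c'_def by simp
qed


lemma final_alg:
  fixes D N lc c K1 :: real
  assumes D1: "D \<ge> 1" and N4: "N \<ge> 4*D" and c: "0 < c" "c < 1" and K1: "K1 \<ge> 0"
    and big: "N/(D+1) > 1"
    and low: "lc \<ge> (D*N/2) * ln (N/(D+1)) * (1 - c*(D-1)/(D+1)) - K1*D*N"
    and up: "lc \<le> 2*D*N + (D*N/2) * ((1 - c*(D-1)/(D+1)) * ln (N/D) + c*(D-1)/(D+1) * ln D)"
  shows "- max 10 (4*K1) / ln (N/D) \<le> lc / (D*N/2 * ln (N/(D+1))) - (1 - c*(D-1)/(D+1)) \<and>
         lc / (D*N/2 * ln (N/(D+1))) - (1 - c*(D-1)/(D+1)) \<le> c * ln D / ln (N/(D+1)) + max 10 (4*K1) / ln (N/D)"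
proof -
  define c' where "c' = c*(D-1)/(D+1)"
  define L where "L = ln (N/(D+1))"
  define L0 where "L0 = ln (N/D)"
  define C where "C = max 10 (4*K1)"
  define P where "P = D*N/2 * L"
  have N0: "N > 0" using N4 D1 by simp
  have L0': "L > 0" unfolding L_def using big by simp
  have LL0: "L \<le> L0" unfolding L_def L0_def using N0 D1
    by (subst ln_le_cancel_iff) (auto intro: divide_left_mono)
  have L0pos: "L0 > 0" using L0' LL0 by simp
  have L02: "L0 \<le> 2*L"
  proof -
    have "(D+1)*(D+1) \<le> N*D"
    proof -
      have "(D+1)*(D+1) \<le> (2*D)*(2*D)" using D1 by (intro mult_mono) auto
      also have "\<dots> = (4*D)*D" by simp
      also have "\<dots> \<le> N*D" using N4 D1 by (intro mult_right_mono) auto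
      finally show ?thesis .
    qed
    then have m: "N*((D+1)*(D+1)) \<le> N*N*D" using N0 by (simp add: mult_left_mono mult.assoc)
    have X0: "(D+1)*(D+1) > 0" using D1 by simp
    have D0: "D > 0" using D1 by simp
    have "N*((D+1)*(D+1))/D \<le> N*N" using m D0 by (simp add: pos_divide_le_eq)
    then have "(N/D)*((D+1)*(D+1)) \<le> N*N" by simp
    then have "N/D \<le> N*N/((D+1)*(D+1))" using X0 by (simp add: pos_le_divide_eq)
    then have "N/D \<le> (N/(D+1)) * (N/(D+1))" by simp
    then have "ln (N/D) \<le> ln ((N/(D+1)) * (N/(D+1)))" using D1 N0 by (subst ln_le_cancel_iff) auto
    also have "\<dots> = 2*L"
    proof -
      have q: "N/(D+1) > 0" using D1 N0 by simp
      show ?thesis unfolding L_def by (subst ln_mult) (use q in auto)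
    qed
    finally show ?thesis unfolding L0_def .
  qed
  have P0: "P > 0" unfolding P_def using D1 N0 L0' by simp
  have c'0: "c' \<ge> 0" "c' \<le> c" unfolding c'_def using c D1 by (auto simp: field_simps)
  have C1: "C \<ge> 10" "C \<ge> 4*K1" unfolding C_def by auto
  have "lc / P - (1 - c') \<ge> (P*(1 - c') - K1*D*N)/P - (1 - c')"
    using low P0 unfolding P_def L_def c'_def by (intro diff_right_mono divide_right_mono) auto
  also have "(P*(1 - c') - K1*D*N)/P - (1 - c') = - (2*K1/L)"
    unfolding P_def using D1 N0 L0' by (simp add: field_simps)
  finally have lw: "lc / P - (1 - c') \<ge> - (2*K1/L)" .
  have "2*K1/L \<le> 4*K1/L0"
  proof -
    have "(2*K1)*L0 \<le> (2*K1)*(2*L)" using L02 K1 by (intro mult_left_mono) auto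
    then have "2*K1*L0 \<le> 4*K1*L" by simp
    then show ?thesis using L0' L0pos by (simp add: field_simps)
  qed
  also have "4*K1/L0 \<le> C/L0" using C1 L0pos by (intro divide_right_mono) auto
  finally have lw2: "- (C/L0) \<le> lc / P - (1 - c')" using lw by linarith
  have "lc / P - (1 - c') \<le> (2*D*N + (D*N/2) * ((1 - c') * L0 + c' * ln D)) / P - (1 - c')"
    using up P0 unfolding P_def L0_def c'_def by (intro diff_right_mono divide_right_mono) auto
  also have "\<dots> = 4/L + (1 - c')*(L0 - L)/L + c' * ln D / L"
    unfolding P_def using D1 N0 L0' by (simp add: field_simps)
  also have "\<dots> \<le> 4/L + 1/L + c * ln D / L"
  proof -
    have "L0 - L \<le> 1"
    proof -
      have "L0 - L = ln ((D+1)/D)" unfolding L0_def L_def using D1 N0 by (simp add: ln_div)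
      also have "\<dots> \<le> (D+1)/D - 1" using D1 by (intro ln_le_minus_one) auto
      also have "\<dots> \<le> 1" using D1 by (simp add: field_simps)
      finally show ?thesis .
    qed
    moreover have "0 \<le> 1 - c'" "1 - c' \<le> 1" "L0 - L \<ge> 0" using c'0 c LL0 by auto
    ultimately have "(1 - c')*(L0 - L) \<le> 1" by (intro mult_le_one) auto
    then have a: "(1 - c')*(L0 - L)/L \<le> 1/L" using L0' by (intro divide_right_mono) auto
    have "c' * ln D \<le> c * ln D" using c'0 D1 by (intro mult_right_mono) auto
    then have b: "c' * ln D / L \<le> c * ln D / L" using L0' by (intro divide_right_mono) auto
    show ?thesis using a b by linarith
  qed
  also have "\<dots> = c * ln D / L + 5/L" by (simp add: field_simps)
  also have "5/L \<le> C/L0"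
  proof -
    have "10*L \<le> C*L" using C1 L0' by (intro mult_right_mono) auto
    then have "5*L0 \<le> C*L" using L02 by linarith
    then show ?thesis using L0' L0pos by (simp add: field_simps)
  qed
  finally have up2: "lc / P - (1 - c') \<le> c * ln D / L + C/L0" by simp
  show ?thesis using lw2 up2 unfolding P_def L_def L0_def C_def c'_def by simp
qed


theorem theorem1:
  fixes c :: real and d :: "nat \<Rightarrow> nat"
  assumes "0 < c" "c < 1"
    and "(\<lambda>n. real (d n)) \<in> o(\<lambda>n. real n)"
  shows "\<exists>C::real. \<exists>N::nat. \<forall>n\<ge>N. d n \<ge> 1 \<longrightarrow> even (d n * n) \<longrightarrow>
    (let r = ln (real (card (G_dc (d n) c n))) /
             (real (d n) * real n / 2 * ln (real n / (real (d n) + 1)))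
           - (1 - c * (real (d n) - 1) / (real (d n) + 1))
     in - C / ln (real n / real (d n)) \<le> r \<and>
        r \<le> c * ln (real (d n)) / ln (real n / (real (d n) + 1)) + C / ln (real n / real (d n)))"
proof -
  have c: "0 < c" "c < 1" using assms(1,2) .
  define B where "B = 30/(c*(1-c))"
  have cc: "c*(1-c) \<le> 1/4"
  proof -
    have "0 \<le> (c - 1/2)^2" by simp
    then show ?thesis by (simp add: power2_eq_square algebra_simps)
  qed
  have cc0: "c*(1-c) > 0" using c by simp
  have B120: "B \<ge> 120"
  proof -
    have "30/(1/4) \<le> 30/(c*(1-c))" using cc cc0 by (intro divide_left_mono) auto
    then show ?thesis unfolding B_def by simp
  qed
  have "eventually (\<lambda>n. norm (real (d n)) \<le> (1/B) * norm (real n)) at_top"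
    by (rule landau_o.smallD[OF assms(3)]) (use B120 in simp)
  then obtain N0 where N0: "\<And>n. n \<ge> N0 \<Longrightarrow> real (d n) \<le> (1/B) * real n"
    unfolding eventually_at_top_linorder by auto
  define K1 where "K1 = 5 - ln c + (1 + ln (4/(1-c)))/2"
  have K1: "K1 \<ge> 0"
  proof -
    have "ln c \<le> 0" using c by simp
    moreover have "ln (4/(1-c)) \<ge> 0" using c by simp
    ultimately show ?thesis unfolding K1_def by simp
  qed
  show ?thesis
  proof (intro exI allI impI)
    fix n assume n: "n \<ge> N0" and d1: "d n \<ge> 1" and ev: "even (d n * n)"
    define D where "D = real (d n)"
    define Nn where "Nn = real n"
    have D1: "D \<ge> 1" unfolding D_def using d1 by simp
    have "D \<le> (1/B) * Nn" unfolding D_def Nn_def using N0[OF n] .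
    then have ND: "Nn \<ge> B * D" using B120 by (simp add: field_simps)
    have BD: "B * D \<ge> 120 * D" using B120 D1 by (intro mult_right_mono) auto
    have big: "real n \<ge> 30/(c*(1-c)) * real (d n)" using ND unfolding B_def D_def Nn_def .
    have LL: "card (G_dc (d n) c n) \<ge> 1 \<and>
     ln (card (G_dc (d n) c n)) \<ge> (real (d n) * real n / 2) * ln (real n / (real (d n) + 1)) * (1 - c * (real (d n) - 1) / (real (d n) + 1))
        - (5 - ln c + (1 + ln (4/(1-c)))/2) * real (d n) * real n"
      by (rule lower_log[OF d1 c ev big])
    have n4: "real n \<ge> 4 * real (d n)" using ND BD D1 unfolding D_def Nn_def by linarith
    have UL: "ln (card (G_dc (d n) c n)) \<le> 2 * real (d n) * real n
     + (real (d n) * real n / 2) * ((1 - c*(real (d n) - 1)/(real (d n) + 1)) * ln (real n / real (d n)) + c*(real (d n) - 1)/(real (d n) + 1) * ln (real (d n)))"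
      by (rule upper_log[OF d1 c ev n4]) (use LL in blast)
    have bigq: "Nn/(D+1) > 1"
    proof -
      have "D + 1 < Nn" using ND BD D1 by linarith
      moreover have "D + 1 > 0" using D1 by simp
      ultimately show ?thesis by simp
    qed
    have F: "- max 10 (4*K1) / ln (Nn/D) \<le> ln (card (G_dc (d n) c n)) / (D*Nn/2 * ln (Nn/(D+1))) - (1 - c*(D-1)/(D+1)) \<and>
         ln (card (G_dc (d n) c n)) / (D*Nn/2 * ln (Nn/(D+1))) - (1 - c*(D-1)/(D+1)) \<le> c * ln D / ln (Nn/(D+1)) + max 10 (4*K1) / ln (Nn/D)"
    proof (rule final_alg[OF D1 _ c K1 bigq])
      show "Nn \<ge> 4*D" using n4 unfolding D_def Nn_def .
      show "ln (card (G_dc (d n) c n)) \<ge> (D*Nn/2) * ln (Nn/(D+1)) * (1 - c*(D-1)/(D+1)) - K1*D*Nn"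
        using LL unfolding D_def Nn_def K1_def by simp
      show "ln (card (G_dc (d n) c n)) \<le> 2*D*Nn + (D*Nn/2) * ((1 - c*(D-1)/(D+1)) * ln (Nn/D) + c*(D-1)/(D+1) * ln D)"
        using UL unfolding D_def Nn_def by simp
    qed
    then show "let r = ln (real (card (G_dc (d n) c n))) /
             (real (d n) * real n / 2 * ln (real n / (real (d n) + 1)))
           - (1 - c * (real (d n) - 1) / (real (d n) + 1))
     in - max 10 (4*K1) / ln (real n / real (d n)) \<le> r \<and>
        r \<le> c * ln (real (d n)) / ln (real n / (real (d n) + 1)) + max 10 (4*K1) / ln (real n / real (d n))"
      unfolding Let_def D_def Nn_def by simp
  qed
qed


end
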